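(* Assume $\sigma e^{-a}>1$, fix $\theta\in\{\ell,K+1\}$ and $k\in\{1,\dots,K\}$, and consider the regime $\ell\to\infty$, $m\to\infty$, $q\to0$, $\ell q\to a$. Let $\delta>0$. There exist positive reals $\alpha,\alpha',\beta,\beta'$ (depending on $\delta,\delta'$) such that for $\ell,m$ large enough and $q,\delta'$ small enough, for $Z^\bullet$ denoting either $Z^L$ or $Z^U$ and $\tau^\bullet(A)=\inf\{t\ge0:Z^\bullet_t\in A\}$: $$\forall i\in\{0,\dots,m\}\quad P\big(\tau^\bullet(V_k(\delta))\ge m^\alpha\mid Z^\bullet_0=i\big)\le\exp(-\alpha'm),$$ $$\forall i\in V_k(\delta)\quad P\big(\tau^\bullet(V_k(2\delta)^c)\le\exp(\beta m)\mid Z^\bullet_0=i\big)\le\exp(-\beta'm).$$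
   Context: Let $p=\kappa q/(\kappa-1)$ and $M_H(b,c)=\sum_{k'-l=c-b}\binom{\ell-b}{k'}\binom{b}{l}(p(1-1/\kappa))^{k'}(1-p(1-1/\kappa))^{\ell-b-k'}(p/\kappa)^l(1-p/\kappa)^{b-l}$ (sum over $0\le k'\le\ell-b$, $0\le l\le b$). Set $\varepsilon_\theta=0$ if $\theta=\ell$ and $\varepsilon_\theta=M_H(k+1,k)$ if $\theta=K+1$. Let $\rho^*_j=(\sigma e^{-a}-1)\frac{a^j}{j!}\sum_{i\ge1}i^j\sigma^{-i}$. For $\rho=(\rho_0,\dots,\rho_{k-1})\in[0,1]^k$, $S=\sum_{l<k}\rho_l$, $D(\rho)=(\sigma-1)\rho_0+1$, define $\delta_m(\rho)=0$, $\gamma_0(\rho)=0$ and $\delta_i(\rho)=\frac{1-i/m}{D(\rho)}\big(\sigma\rho_0M_H(0,k)+\sum_{l=1}^{k-1}\rho_lM_H(l,k)+\frac imM_H(k,k)+(1-S-\frac im)\varepsilon_\theta\big)$ for $0\le i<m$, $\gamma_i(\rho)=\frac{i/m}{D(\rho)}\big(\sigma\rho_0(1-M_H(0,k))+\sum_{l=1}^{k-1}\rho_l(1-M_H(l,k))+\frac im(1-M_H(k,k))+(1-S-\frac im)(1-\varepsilon_\theta)\big)$ for $0<i\le m$. For $\delta'>0$ let $W_{k-1}(2\delta')=\{\rho\in[0,1]^k:|\rho_i-\rho^*_i|<2\delta',\ 0\le i<k\}$ and set $\delta^L_i=\inf_{W_{k-1}(2\delta')}\delta_i$, $\gamma^L_i=\sup_{W_{k-1}(2\delta')}\gamma_i$,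 $\delta^U_i=\sup_{W_{k-1}(2\delta')}\delta_i$, $\gamma^U_i=\inf_{W_{k-1}(2\delta')}\gamma_i$. $Z^L$ (resp. $Z^U$) is the birth and death chain on $\{0,\dots,m\}$ moving from $i$ to $i+1$ with probability $\delta^L_i$ (resp. $\delta^U_i$), to $i-1$ with probability $\gamma^L_i$ (resp. $\gamma^U_i$), staying otherwise. $V_k(\delta)=\{i\in\{0,\dots,m\}:|i/m-\rho^*_k|<\delta\}$. *)

theory Defs
  imports "HOL-Analysis.Analysis"
begin

definition Mh :: "nat \<Rightarrow> real \<Rightarrow> real \<Rightarrow> nat \<Rightarrow> nat \<Rightarrow> real" where
  "Mh L \<kappa> q b c =
     (let p = \<kappa> * q / (\<kappa> - 1) in
      \<Sum>k'\<in>{0..L - b}. \<Sum>l\<in>{0..b}.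
        (if int k' - int l = int c - int b then
           real ((L - b) choose k') * (p * (1 - 1/\<kappa>)) ^ k' * (1 - p * (1 - 1/\<kappa>)) ^ (L - b - k')
           * real (b choose l) * (p / \<kappa>) ^ l * (1 - p / \<kappa>) ^ (b - l)
         else 0))"

datatype theta_mode = Theta_ell | Theta_Kplus1

definition eps_theta :: "nat \<Rightarrow> real \<Rightarrow> real \<Rightarrow> nat \<Rightarrow> theta_mode \<Rightarrow> real" where
  "eps_theta L \<kappa> q k th = (case th of Theta_ell \<Rightarrow> 0 | Theta_Kplus1 \<Rightarrow> Mh L \<kappa> q (k + 1) k)"

definition rho_star :: "real \<Rightarrow> real \<Rightarrow> nat \<Rightarrow> real" where
  "rho_star \<sigma> a j = (\<sigma> * exp (- a) - 1) * a ^ j / fact j * (\<Sum>i. real (Suc i) ^ j / \<sigma> ^ Suc i)"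

text \<open>delta_i(rho) and gamma_i(rho); rho is a vector (rho_0,...,rho_{k-1}), given as a function on nat.\<close>
definition delta_fn :: "real \<Rightarrow> real \<Rightarrow> nat \<Rightarrow> real \<Rightarrow> nat \<Rightarrow> nat \<Rightarrow> theta_mode \<Rightarrow> (nat \<Rightarrow> real) \<Rightarrow> nat \<Rightarrow> real" where
  "delta_fn \<sigma> \<kappa> L q m k th \<rho> i =
     (if i < m then
        (1 - real i / real m) / ((\<sigma> - 1) * \<rho> 0 + 1) *
        (\<sigma> * \<rho> 0 * Mh L \<kappa> q 0 k + (\<Sum>l\<in>{1..k-1}. \<rho> l * Mh L \<kappa> q l k)
         + real i / real m * Mh L \<kappa> q k k
         + (1 - (\<Sum>l<k. \<rho> l) - real i / real m) * eps_theta L \<kappa> q k th)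
      else 0)"

definition gamma_fn :: "real \<Rightarrow> real \<Rightarrow> nat \<Rightarrow> real \<Rightarrow> nat \<Rightarrow> nat \<Rightarrow> theta_mode \<Rightarrow> (nat \<Rightarrow> real) \<Rightarrow> nat \<Rightarrow> real" where
  "gamma_fn \<sigma> \<kappa> L q m k th \<rho> i =
     (if 0 < i then
        (real i / real m) / ((\<sigma> - 1) * \<rho> 0 + 1) *
        (\<sigma> * \<rho> 0 * (1 - Mh L \<kappa> q 0 k) + (\<Sum>l\<in>{1..k-1}. \<rho> l * (1 - Mh L \<kappa> q l k))
         + real i / real m * (1 - Mh L \<kappa> q k k)
         + (1 - (\<Sum>l<k. \<rho> l) - real i / real m) * (1 - eps_theta L \<kappa> q k th))
      else 0)"

definition Wset :: "real \<Rightarrow> real \<Rightarrow> nat \<Rightarrow> real \<Rightarrow> (nat \<Rightarrow> real) set" where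
  "Wset \<sigma> a k \<delta>' = {\<rho>. (\<forall>i<k. 0 \<le> \<rho> i \<and> \<rho> i \<le> 1 \<and> \<bar>\<rho> i - rho_star \<sigma> a i\<bar> < 2 * \<delta>') \<and> (\<forall>i\<ge>k. \<rho> i = 0)}"

definition deltaL where
  "deltaL \<sigma> a \<kappa> L q m k th \<delta>' i = Inf ((\<lambda>\<rho>. delta_fn \<sigma> \<kappa> L q m k th \<rho> i) ` Wset \<sigma> a k \<delta>')"
definition gammaL where
  "gammaL \<sigma> a \<kappa> L q m k th \<delta>' i = Sup ((\<lambda>\<rho>. gamma_fn \<sigma> \<kappa> L q m k th \<rho> i) ` Wset \<sigma> a k \<delta>')"
definition deltaU where
  "deltaU \<sigma> a \<kappa> L q m k th \<delta>' i = Sup ((\<lambda>\<rho>. delta_fn \<sigma> \<kappa> L q m k th \<rho> i) ` Wset \<sigma> a k \<delta>')"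
definition gammaU where
  "gammaU \<sigma> a \<kappa> L q m k th \<delta>' i = Inf ((\<lambda>\<rho>. gamma_fn \<sigma> \<kappa> L q m k th \<rho> i) ` Wset \<sigma> a k \<delta>')"

text \<open>Birth-death chain with up-probabilities up i, down-probabilities dn i, staying with
  probability 1 - up i - dn i. avoid_prob up dn A n i is the probability, starting from i,
  that Z_t is not in A for all t = 0,...,n-1 (first-step decomposition of the path law).\<close>
fun avoid_prob :: "(nat \<Rightarrow> real) \<Rightarrow> (nat \<Rightarrow> real) \<Rightarrow> nat set \<Rightarrow> nat \<Rightarrow> nat \<Rightarrow> real" where
  "avoid_prob up dn A 0 i = 1"
| "avoid_prob up dn A (Suc n) i =
     (if i \<in> A then 0
      else up i * avoid_prob up dn A n (Suc i) + dn i * avoid_prob up dn A n (i - 1)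
           + (1 - up i - dn i) * avoid_prob up dn A n i)"

text \<open>P(tau(A) >= T | Z_0 = i) for real T >= 0, with tau(A) = inf{t >= 0 : Z_t in A}.\<close>
definition prob_tau_ge :: "(nat \<Rightarrow> real) \<Rightarrow> (nat \<Rightarrow> real) \<Rightarrow> nat set \<Rightarrow> real \<Rightarrow> nat \<Rightarrow> real" where
  "prob_tau_ge up dn A T i = avoid_prob up dn A (nat \<lceil>T\<rceil>) i"

text \<open>P(tau(A) <= T | Z_0 = i) for real T >= 0.\<close>
definition prob_tau_le :: "(nat \<Rightarrow> real) \<Rightarrow> (nat \<Rightarrow> real) \<Rightarrow> nat set \<Rightarrow> real \<Rightarrow> nat \<Rightarrow> real" where
  "prob_tau_le up dn A T i = 1 - avoid_prob up dn A (nat \<lfloor>T\<rfloor> + 1) i"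

definition Zup where
  "Zup \<sigma> a \<kappa> L q m k th \<delta>' upper =
     (if upper then deltaU \<sigma> a \<kappa> L q m k th \<delta>' else deltaL \<sigma> a \<kappa> L q m k th \<delta>')"
definition Zdn where
  "Zdn \<sigma> a \<kappa> L q m k th \<delta>' upper =
     (if upper then gammaU \<sigma> a \<kappa> L q m k th \<delta>' else gammaL \<sigma> a \<kappa> L q m k th \<delta>')"

definition Vk :: "real \<Rightarrow> real \<Rightarrow> nat \<Rightarrow> nat \<Rightarrow> real \<Rightarrow> nat set" where
  "Vk \<sigma> a m k \<delta> = {i. i \<le> m \<and> \<bar>real i / real m - rho_star \<sigma> a k\<bar> < \<delta>}"

end

theory Submission
  imports Defs
begin


definition Tser :: "real \<Rightarrow> nat \<Rightarrow> real" where
  "Tser \<sigma> j = (\<Sum>i. real (Suc i) ^ j / \<sigma> ^ Suc i)"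

lemma rho_star_Tser: "rho_star \<sigma> a j = (\<sigma> * exp (- a) - 1) * a ^ j / fact j * Tser \<sigma> j"
  by (simp add: rho_star_def Tser_def)

lemma geom_suc_sums: "\<bar>r::real\<bar> < 1 \<Longrightarrow> (\<lambda>i. r ^ Suc i) sums (r / (1 - r))"
proof -
  assume "\<bar>r\<bar> < 1"
  then have "(\<lambda>n. r ^ n) sums (1 / (1 - r))" by (intro geometric_sums) simp
  from sums_mult[OF this, of r] show ?thesis by simp
qed

lemma pow_fact_le_exp:
  fixes x :: real assumes "0 \<le> x" "1 \<le> k"
  shows "x ^ k / fact k \<le> exp x - 1"
proof -
  have s: "summable (\<lambda>n. x^n /\<^sub>R fact n)" using exp_converges sums_summable by blast
  have "sum (\<lambda>n. x^n /\<^sub>R fact n) {0,k} \<le> (\<Sum>n. x^n /\<^sub>R fact n)"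
    by (rule sum_le_suminf[OF s]) (use assms in auto)
  also have "\<dots> = exp x" using exp_converges sums_unique by metis
  finally have "x ^ k * inverse (fact k) + 1 \<le> exp x" using assms by (simp add: divide_inverse mult.commute)
  then show ?thesis by (simp add: divide_inverse)
qed

lemma pow_le_fact_exp:
  fixes x :: real assumes "0 \<le> x"
  shows "x ^ k \<le> fact k * exp x"
proof (cases "k = 0")
  case True then show ?thesis using exp_ge_add_one_self[of x] assms by simp
next
  case False
  then have "x ^ k / fact k \<le> exp x" using pow_fact_le_exp[OF assms, of k] by simp
  then show ?thesis by (simp add: divide_le_eq mult.commute)
qed

lemma Tser_summable:
  assumes "\<sigma> > 1"
  shows "summable (\<lambda>i. real (Suc i) ^ j / \<sigma> ^ Suc i)"
proof -
  define e where "e = ln \<sigma> / 2"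
  have e: "e > 0" using assms by (simp add: e_def)
  have ee: "exp e * exp e = \<sigma>" using assms by (simp add: e_def flip: exp_add)
  have "exp e > 1" using e by simp
  then have "exp e < exp e * exp e" by simp
  then have r1: "exp e / \<sigma> < 1" using ee assms by simp
  have r0: "exp e / \<sigma> > 0" using assms by simp
  have "summable (\<lambda>i. (exp e / \<sigma>) ^ Suc i)"
    using geom_suc_sums[of "exp e / \<sigma>"] r1 r0 sums_summable by auto
  then have sg: "summable (\<lambda>i. fact j / e ^ j * (exp e / \<sigma>) ^ Suc i)"
    by (rule summable_mult)
  show ?thesis
  proof (rule summable_comparison_test[OF _ sg], intro exI allI impI)
    fix i :: nat
    have "(e * real (Suc i)) ^ j \<le> fact j * exp (e * real (Suc i))"
      using e by (intro pow_le_fact_exp) simp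
    moreover have "exp (e * real (Suc i)) = exp e ^ Suc i"
      using exp_of_nat_mult[of "Suc i" e] by (simp add: mult.commute)
    ultimately have "e ^ j * real (Suc i) ^ j \<le> fact j * exp e ^ Suc i"
      by (simp only: power_mult_distrib)
    then have "real (Suc i) ^ j \<le> fact j / e ^ j * exp e ^ Suc i"
      using e by (simp add: field_simps)
    then show "norm (real (Suc i) ^ j / \<sigma> ^ Suc i) \<le> fact j / e ^ j * (exp e / \<sigma>) ^ Suc i"
    proof -
      have "norm (real (Suc i) ^ j / \<sigma> ^ Suc i) = real (Suc i) ^ j / \<sigma> ^ Suc i" using assms by simp
      also have "\<dots> \<le> (fact j / e ^ j * exp e ^ Suc i) / \<sigma> ^ Suc i"
        using assms \<open>real (Suc i) ^ j \<le> _\<close> by (intro divide_right_mono) auto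
      also have "\<dots> = fact j / e ^ j * (exp e / \<sigma>) ^ Suc i" by (simp add: power_divide)
      finally show ?thesis .
    qed
  qed
qed

lemma Tser_pos: "\<sigma> > 1 \<Longrightarrow> Tser \<sigma> j > 0"
  unfolding Tser_def
  by (rule suminf_pos[OF Tser_summable]) auto

lemma Tser_0: "\<sigma> > 1 \<Longrightarrow> Tser \<sigma> 0 = 1 / (\<sigma> - 1)"
proof -
  assume s: "\<sigma> > 1"
  have "(\<lambda>i. (1/\<sigma>) ^ Suc i) sums ((1/\<sigma>) / (1 - 1/\<sigma>))" using s by (intro geom_suc_sums) auto
  then have "Tser \<sigma> 0 = (1/\<sigma>) / (1 - 1/\<sigma>)" unfolding Tser_def by (simp add: sums_iff power_one_over)
  then show ?thesis using s by (simp add: field_simps)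
qed

lemma Tser_rec:
  assumes s: "\<sigma> > 1"
  shows "(\<Sum>l\<le>k. real (k choose l) * Tser \<sigma> l) = \<sigma> * Tser \<sigma> k - 1"
proof -
  define f where "f = (\<lambda>i. real (Suc i) ^ k / \<sigma> ^ Suc i)"
  have Tf: "Tser \<sigma> k = suminf f" by (simp add: Tser_def f_def)
  have sf: "summable f" unfolding f_def by (rule Tser_summable[OF s])
  have "(\<Sum>l\<le>k. real (k choose l) * Tser \<sigma> l)
      = (\<Sum>l\<le>k. (\<Sum>i. real (k choose l) * (real (Suc i) ^ l / \<sigma> ^ Suc i)))"
    unfolding Tser_def by (intro sum.cong refl suminf_mult[symmetric] Tser_summable[OF s])
  also have "\<dots> = (\<Sum>i. \<Sum>l\<le>k. real (k choose l) * (real (Suc i) ^ l / \<sigma> ^ Suc i))"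
    by (rule suminf_sum[symmetric]) (intro summable_mult Tser_summable[OF s])
  also have "\<dots> = (\<Sum>i. \<sigma> * f (Suc i))"
  proof (rule suminf_cong)
    fix i
    have "(\<Sum>l\<le>k. real (k choose l) * (real (Suc i) ^ l / \<sigma> ^ Suc i))
        = (\<Sum>l\<le>k. real (k choose l) * real (Suc i) ^ l * 1 ^ (k - l)) / \<sigma> ^ Suc i"
      by (simp add: sum_divide_distrib)
    also have "\<dots> = (real (Suc i) + 1) ^ k / \<sigma> ^ Suc i" by (subst binomial_ring) (rule refl)
    also have "\<dots> = \<sigma> * f (Suc i)" using s by (simp add: f_def add.commute)
    finally show "(\<Sum>l\<le>k. real (k choose l) * (real (Suc i) ^ l / \<sigma> ^ Suc i)) = \<sigma> * f (Suc i)" .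
  qed
  also have "\<dots> = \<sigma> * (\<Sum>i. f (Suc i))"
    by (rule suminf_mult) (use sf summable_Suc_iff in auto)
  also have "\<dots> = \<sigma> * (suminf f - f 0)" by (simp add: suminf_split_head[OF sf])
  also have "\<dots> = \<sigma> * Tser \<sigma> k - 1" using s by (simp add: Tf f_def algebra_simps)
  finally show ?thesis .
qed

lemma rho_ident:
  assumes s: "\<sigma> > 1" and k: "1 \<le> k"
  shows "\<sigma> * rho_star \<sigma> a 0 * (a ^ k / fact k) + (\<Sum>l\<in>{1..k-1}. rho_star \<sigma> a l * (a ^ (k - l) / fact (k - l)))
     = rho_star \<sigma> a k * (\<sigma> - 1)"
proof -
  define s0 where "s0 = \<sigma> * exp (- a) - 1"
  define B where "B = s0 * a ^ k / fact k"
  define S where "S = (\<Sum>l\<in>{1..k-1}. real (k choose l) * Tser \<sigma> l)"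
  have T0: "\<sigma> * Tser \<sigma> 0 = 1 + Tser \<sigma> 0" using Tser_0[OF s] s by (simp add: field_simps)
  have t: "rho_star \<sigma> a l * (a ^ (k - l) / fact (k - l)) = B * (real (k choose l) * Tser \<sigma> l)" if "l \<le> k" for l
  proof -
    have pw: "a ^ l * a ^ (k - l) = a ^ k" using that by (simp flip: power_add)
    have 1: "rho_star \<sigma> a l * (a ^ (k - l) / fact (k - l)) = s0 * (a ^ l * a ^ (k - l)) * Tser \<sigma> l / (fact l * fact (k - l))"
      by (simp add: rho_star_Tser s0_def)
    have 2: "B * (real (k choose l) * Tser \<sigma> l) = s0 * a ^ k * Tser \<sigma> l / (fact l * fact (k - l))"
      using that by (simp add: B_def binomial_fact)
    show ?thesis unfolding 1 2 pw ..
  qed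
  have E1: "(\<Sum>l\<in>{1..k-1}. rho_star \<sigma> a l * (a ^ (k - l) / fact (k - l))) = B * S"
    unfolding sum_distrib_left S_def by (rule sum.cong[OF refl t]) auto
  have "{..k} = insert 0 (insert k {1..k-1})" using k by auto
  then have E2: "(\<Sum>l\<le>k. real (k choose l) * Tser \<sigma> l) = Tser \<sigma> 0 + Tser \<sigma> k + S"
    using k by (simp add: S_def)
  have E3: "\<sigma> * rho_star \<sigma> a 0 * (a ^ k / fact k) = B * (\<sigma> * Tser \<sigma> 0)"
    by (simp add: rho_star_Tser B_def s0_def)
  have E4: "rho_star \<sigma> a k = B * Tser \<sigma> k" by (simp add: rho_star_Tser B_def s0_def)
  have X: "\<sigma> * Tser \<sigma> 0 + S = \<sigma> * Tser \<sigma> k - Tser \<sigma> k"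
    using E2 Tser_rec[OF s, of k] T0 by linarith
  have "B * (\<sigma> * Tser \<sigma> 0) + B * S = B * (\<sigma> * Tser \<sigma> 0 + S)" by (simp add: algebra_simps)
  also have "\<dots> = B * (\<sigma> * Tser \<sigma> k - Tser \<sigma> k)" by (simp only: X)
  also have "\<dots> = B * Tser \<sigma> k * (\<sigma> - 1)" by (simp add: algebra_simps)
  finally show ?thesis using E1 E3 E4 by simp
qed

lemma sigma_gt1: fixes a \<sigma> :: real assumes "a > 0" "\<sigma> * exp (- a) > 1" shows "\<sigma> > 1"
proof (rule ccontr)
  have e: "exp (-a) < 1" using exp_less_cancel_iff[of "-a" 0] assms(1) by simp
  assume "\<not> \<sigma> > 1"
  then have "\<sigma> * exp (-a) \<le> 1 * exp (-a)" using mult_right_mono[of \<sigma> 1 "exp (-a)"] by simp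
  then show False using e assms(2) by linarith
qed

lemma rho_star_pos: assumes "a > 0" "\<sigma> * exp (- a) > 1" shows "rho_star \<sigma> a j > 0"
  using Tser_pos[OF sigma_gt1[OF assms]] assms by (simp add: rho_star_Tser)

lemma rho_star_lt1:
  assumes a: "a > 0" and sa: "\<sigma> * exp (- a) > 1" and k: "1 \<le> k"
  shows "rho_star \<sigma> a k < 1"
proof -
  have s: "\<sigma> > 1" by (rule sigma_gt1[OF a sa])
  define s0 where "s0 = \<sigma> * exp (- a) - 1"
  have s0: "s0 > 0" using sa by (simp add: s0_def)
  define r where "r = exp a / \<sigma>"
  have ea: "exp a * exp (-a) = 1" by (simp flip: exp_add)
  have "exp a < \<sigma>"
  proof -
    have "exp a * 1 < exp a * (\<sigma> * exp (-a))" using sa by simp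
    also have "\<dots> = \<sigma>" using ea by (simp add: algebra_simps)
    finally show ?thesis by simp
  qed
  then have r: "0 < r" "r < 1" using s by (auto simp: r_def)
  have g1: "(\<lambda>i. r ^ Suc i) sums (r / (1 - r))" using r by (intro geom_suc_sums) auto
  have g2: "(\<lambda>i. (1/\<sigma>) ^ Suc i) sums ((1/\<sigma>) / (1 - 1/\<sigma>))" using s by (intro geom_suc_sums) auto
  have g: "(\<lambda>i. r ^ Suc i - (1/\<sigma>) ^ Suc i) sums (r / (1 - r) - (1/\<sigma>) / (1 - 1/\<sigma>))"
    by (rule sums_diff[OF g1 g2])
  have sm: "summable (\<lambda>i. a ^ k / fact k * (real (Suc i) ^ k / \<sigma> ^ Suc i))"
    by (intro summable_mult Tser_summable s)
  have "a ^ k / fact k * Tser \<sigma> k = (\<Sum>i. a ^ k / fact k * (real (Suc i) ^ k / \<sigma> ^ Suc i))"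
    unfolding Tser_def by (rule suminf_mult[symmetric, OF Tser_summable[OF s]])
  also have "\<dots> \<le> (\<Sum>i. r ^ Suc i - (1/\<sigma>) ^ Suc i)"
  proof (rule suminf_le[OF _ sm sums_summable[OF g]])
    fix i
    have "(a * real (Suc i)) ^ k / fact k \<le> exp (a * real (Suc i)) - 1"
      using a k by (intro pow_fact_le_exp) auto
    moreover have "exp (a * real (Suc i)) = exp a ^ Suc i"
      using exp_of_nat_mult[of "Suc i" a] by (simp add: mult.commute)
    ultimately have "a ^ k * real (Suc i) ^ k / fact k \<le> exp a ^ Suc i - 1"
      by (simp add: power_mult_distrib)
    then have "a ^ k * real (Suc i) ^ k / fact k / \<sigma> ^ Suc i \<le> (exp a ^ Suc i - 1) / \<sigma> ^ Suc i"
      using s by (intro divide_right_mono) auto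
    then show "a ^ k / fact k * (real (Suc i) ^ k / \<sigma> ^ Suc i) \<le> r ^ Suc i - (1/\<sigma>) ^ Suc i"
      by (simp add: r_def power_divide diff_divide_distrib)
  qed
  also have "\<dots> = r / (1 - r) - (1/\<sigma>) / (1 - 1/\<sigma>)" using g sums_unique by metis
  finally have le: "a ^ k / fact k * Tser \<sigma> k \<le> r / (1 - r) - 1 / (\<sigma> - 1)"
    using s by (simp add: field_simps)
  have "s0 * (r / (1 - r)) = 1"
  proof -
    have "s0 * exp a = \<sigma> - exp a" unfolding s0_def using ea by (simp add: algebra_simps)
    moreover have "r / (1 - r) = exp a / (\<sigma> - exp a)" using s by (simp add: r_def field_simps)
    ultimately have "s0 * (r / (1 - r)) = (s0 * exp a) / (\<sigma> - exp a)" by simp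
    then show ?thesis using \<open>s0 * exp a = \<sigma> - exp a\<close> \<open>exp a < \<sigma>\<close> s0 r by simp
  qed
  have "rho_star \<sigma> a k = s0 * (a ^ k / fact k * Tser \<sigma> k)" by (simp add: rho_star_Tser s0_def)
  also have "\<dots> \<le> s0 * (r / (1 - r) - 1 / (\<sigma> - 1))" using le s0 by (intro mult_left_mono) auto
  also have "\<dots> = 1 - s0 / (\<sigma> - 1)" using \<open>s0 * (r / (1 - r)) = 1\<close> by (simp add: algebra_simps)
  also have "\<dots> < 1" using s0 s by simp
  finally show ?thesis .
qed



lemma exp_neg_bound: fixes l :: real assumes "0 \<le> l" shows "exp (- l) \<le> 1 - l + l\<^sup>2"
proof -
  have p: "1 + l > 0" using assms by simp
  have "exp (- l) * (1 + l) \<le> exp (- l) * exp l" by (intro mult_left_mono) auto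
  also have "\<dots> = 1" by (simp flip: exp_add)
  also have "1 \<le> (1 - l + l\<^sup>2) * (1 + l)" using assms by (simp add: algebra_simps power2_eq_square power3_eq_cube)
  finally show ?thesis using p by simp
qed

lemma step_bound:
  fixes u d l :: real
  assumes "0 \<le> u" "0 \<le> d" "0 \<le> l" "l \<le> 1"
  shows "u * exp l + d * exp (- l) + (1 - u - d) \<le> 1 + l * (u - d) + l\<^sup>2 * (u + d)"
proof -
  have "u * exp l \<le> u * (1 + l + l\<^sup>2)" using assms exp_bound[of l] by (intro mult_left_mono) auto
  moreover have "d * exp (- l) \<le> d * (1 - l + l\<^sup>2)" using assms exp_neg_bound[of l] by (intro mult_left_mono) auto
  ultimately show ?thesis by (simp add: algebra_simps)
qed

lemma exp_shift: "exp (l * (real (Suc i) - X)) = exp (l * (real i - X)) * exp l"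
  "exp (l * (X - real (Suc i))) = exp (l * (X - real i)) * exp (- l)"
  by (simp_all add: algebra_simps flip: exp_add)

lemma exp_shift2: "0 < i \<Longrightarrow> exp (l * (real (i - 1) - X)) = exp (l * (real i - X)) * exp (- l)"
  "0 < i \<Longrightarrow> exp (l * (X - real (i - 1))) = exp (l * (X - real i)) * exp l"
  by (simp_all add: of_nat_diff algebra_simps flip: exp_add)

lemma Eg:
  fixes up dn :: "nat \<Rightarrow> real" and l X1 X2 :: real
  assumes "0 < i \<or> dn i = 0"
  defines "T1 \<equiv> exp (l * (real i - X1))" and "T2 \<equiv> exp (l * (X2 - real i))"
  shows "up i * (exp (l * (real (Suc i) - X1)) + exp (l * (X2 - real (Suc i))))
       + dn i * (exp (l * (real (i - 1) - X1)) + exp (l * (X2 - real (i - 1))))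
       + (1 - up i - dn i) * (exp (l * (real i - X1)) + exp (l * (X2 - real i)))
     = T1 * (up i * exp l + dn i * exp (- l) + (1 - up i - dn i))
       + T2 * (up i * exp (- l) + dn i * exp l + (1 - up i - dn i))"
  using assms(1)
proof
  assume "0 < i"
  then show ?thesis unfolding T1_def T2_def exp_shift exp_shift2[OF \<open>0 < i\<close>] by (simp add: algebra_simps)
next
  assume "dn i = 0"
  then show ?thesis unfolding T1_def T2_def exp_shift by (simp add: algebra_simps)
qed

lemma KI_aux:
  fixes T1 T2 fp fm \<mu> :: real
  assumes "1 \<le> T1" "0 \<le> T2" "T2 \<le> \<mu>\<^sup>2 / 16" "fp \<le> 1 - \<mu>\<^sup>2 / 4" "fm \<le> 2" "0 < \<mu>" "\<mu> \<le> 1"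
  shows "T1 * fp + T2 * fm \<le> (1 - \<mu>\<^sup>2 / 8) * (T1 + T2)"
proof -
  have "T1 * fp \<le> T1 * (1 - \<mu>\<^sup>2 / 4)" using assms by (intro mult_left_mono) auto
  moreover have "T2 * fm \<le> T2 * 2" using assms by (intro mult_left_mono) auto
  moreover have "(1 + \<mu>\<^sup>2/8) * T2 \<le> 2 * (\<mu>\<^sup>2 / 16)"
  proof -
    have "\<mu>\<^sup>2 \<le> 1" using assms by (simp add: power_le_one)
    then have "1 + \<mu>\<^sup>2/8 \<le> 2" by simp
    then show ?thesis using assms by (intro mult_mono) auto
  qed
  moreover have "\<mu>\<^sup>2 / 8 * 1 \<le> \<mu>\<^sup>2 / 8 * T1" using assms by (intro mult_left_mono) auto
  ultimately have f1: "T1 * fp \<le> T1 - (T1 * \<mu>\<^sup>2) / 4" and f2: "T2 * fm \<le> 2 * T2"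
    and f3: "T2 + (T2 * \<mu>\<^sup>2) / 8 \<le> \<mu>\<^sup>2 / 8" and f4: "\<mu>\<^sup>2 / 8 \<le> (T1 * \<mu>\<^sup>2) / 8"
    by (simp_all add: algebra_simps)
  have "(1 - \<mu>\<^sup>2 / 8) * (T1 + T2) = T1 + T2 - (T1 * \<mu>\<^sup>2) / 8 - (T2 * \<mu>\<^sup>2) / 8"
    by (simp add: algebra_simps)
  then show ?thesis using f1 f2 f3 f4 by linarith
qed

lemma KI:
  fixes up dn :: "nat \<Rightarrow> real" and m :: nat and c \<delta> \<mu> l :: real
  assumes m: "m \<ge> 1" and \<delta>: "\<delta> > 0" and \<mu>: "0 < \<mu>" "\<mu> \<le> 1" and l_def: "l = \<mu>/2"
  and h1: "0 \<le> up i" "0 \<le> dn i" "up i + dn i \<le> 1"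
  and hd1: "c + \<delta> \<le> real i / real m \<Longrightarrow> \<mu> \<le> dn i - up i"
  and hd2: "real i / real m \<le> c - \<delta> \<Longrightarrow> \<mu> \<le> up i - dn i"
  and big: "exp (- \<mu> * \<delta> * real m) \<le> \<mu>\<^sup>2 / 16"
  and out: "\<not> \<bar>real i / real m - c\<bar> < \<delta>"
  shows "exp (l * (real i - real m * (c + \<delta>))) * (up i * exp (l) + dn i * exp (- l) + (1 - up i - dn i))
       + exp (l * (real m * (c - \<delta>) - real i)) * (up i * exp (- l) + dn i * exp (l) + (1 - up i - dn i))
     \<le> (1 - \<mu>\<^sup>2 / 8) * (exp (l * (real i - real m * (c + \<delta>))) + exp (l * (real m * (c - \<delta>) - real i)))"
proof -
  have l: "0 \<le> l" "l \<le> 1/2" using \<mu> by (auto simp: l_def)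
  have mp: "real m > 0" using m by simp
  have sp: "up i * exp l + dn i * exp (- l) + (1 - up i - dn i) \<le> 1 + l * (up i - dn i) + l\<^sup>2 * (up i + dn i)"
    using step_bound[of "up i" "dn i" l] h1 l by auto
  have sm: "up i * exp (- l) + dn i * exp l + (1 - up i - dn i) \<le> 1 + l * (dn i - up i) + l\<^sup>2 * (up i + dn i)"
    using step_bound[of "dn i" "up i" l] h1 l by (auto simp: algebra_simps)
  have l2: "l\<^sup>2 * (up i + dn i) \<le> l\<^sup>2" using h1 by (intro mult_left_le) auto
  have l2': "l\<^sup>2 \<le> 1/4" using l power_mono[of l "1/2" 2] by (simp add: power2_eq_square)
  from out have "c + \<delta> \<le> real i / real m \<or> real i / real m \<le> c - \<delta>" by auto
  then show ?thesis
  proof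
    assume A: "c + \<delta> \<le> real i / real m"
    then have A': "real m * (c + \<delta>) \<le> real i" using mp by (simp add: le_divide_eq mult.commute)
    have d: "\<mu> \<le> dn i - up i" using hd1 A .
    have "l * \<mu> \<le> l * (dn i - up i)" using d l by (intro mult_left_mono) auto
    then have "l * (up i - dn i) \<le> - l * \<mu>" by (simp add: algebra_simps)
    then have fp: "up i * exp l + dn i * exp (- l) + (1 - up i - dn i) \<le> 1 - \<mu>\<^sup>2/4"
      using sp l2 by (simp add: l_def power2_eq_square)
    have "l * (dn i - up i) \<le> l * 1" using h1 l by (intro mult_left_mono) auto
    then have fm: "up i * exp (- l) + dn i * exp l + (1 - up i - dn i) \<le> 2" using sm l2 l l2' by linarith
    have "l * (real m * (c - \<delta>) - real i) \<le> - \<mu> * \<delta> * real m"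
    proof -
      have "real m * (c - \<delta>) - real i \<le> - 2 * \<delta> * real m" using A' by (simp add: algebra_simps)
      then have "l * (real m * (c - \<delta>) - real i) \<le> l * (- 2 * \<delta> * real m)" using l by (intro mult_left_mono) auto
      then show ?thesis by (simp add: l_def)
    qed
    then have T2: "exp (l * (real m * (c - \<delta>) - real i)) \<le> \<mu>\<^sup>2/16" using big by (meson exp_le_cancel_iff order_trans)
    have T1: "1 \<le> exp (l * (real i - real m * (c + \<delta>)))" using A' l by simp
    show ?thesis by (rule KI_aux[OF T1 _ T2 fp fm \<mu>]) simp
  next
    assume A: "real i / real m \<le> c - \<delta>"
    then have A': "real i \<le> real m * (c - \<delta>)" using mp by (simp add: divide_le_eq mult.commute)
    have d: "\<mu> \<le> up i - dn i" using hd2 A .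
    have "l * \<mu> \<le> l * (up i - dn i)" using d l by (intro mult_left_mono) auto
    then have "l * (dn i - up i) \<le> - l * \<mu>" by (simp add: algebra_simps)
    then have fp: "up i * exp (- l) + dn i * exp l + (1 - up i - dn i) \<le> 1 - \<mu>\<^sup>2/4"
      using sm l2 by (simp add: l_def power2_eq_square)
    have "l * (up i - dn i) \<le> l * 1" using h1 l by (intro mult_left_mono) auto
    then have fm: "up i * exp l + dn i * exp (- l) + (1 - up i - dn i) \<le> 2" using sp l2 l l2' by linarith
    have "l * (real i - real m * (c + \<delta>)) \<le> - \<mu> * \<delta> * real m"
    proof -
      have "real i - real m * (c + \<delta>) \<le> - 2 * \<delta> * real m" using A' by (simp add: algebra_simps)
      then have "l * (real i - real m * (c + \<delta>)) \<le> l * (- 2 * \<delta> * real m)" using l by (intro mult_left_mono) auto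
      then show ?thesis by (simp add: l_def)
    qed
    then have T2: "exp (l * (real i - real m * (c + \<delta>))) \<le> \<mu>\<^sup>2/16" using big by (meson exp_le_cancel_iff order_trans)
    have T1: "1 \<le> exp (l * (real m * (c - \<delta>) - real i))" using A' l by simp
    have "exp (l * (real m * (c - \<delta>) - real i)) * (up i * exp (- l) + dn i * exp l + (1 - up i - dn i))
      + exp (l * (real i - real m * (c + \<delta>))) * (up i * exp l + dn i * exp (- l) + (1 - up i - dn i))
      \<le> (1 - \<mu>\<^sup>2 / 8) * (exp (l * (real m * (c - \<delta>) - real i)) + exp (l * (real i - real m * (c + \<delta>))))"
      by (rule KI_aux[OF T1 _ T2 fp fm \<mu>]) simp
    then show ?thesis by (simp add: algebra_simps)
  qed
qed

lemma one_le_G: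
  fixes m :: nat and c \<delta> l :: real
  assumes "m \<ge> 1" "0 \<le> l" "\<not> \<bar>real i / real m - c\<bar> < \<delta>"
  shows "1 \<le> exp (l * (real i - real m * (c + \<delta>))) + exp (l * (real m * (c - \<delta>) - real i))"
proof -
  have mp: "real m > 0" using assms by simp
  from assms(3) have "c + \<delta> \<le> real i / real m \<or> real i / real m \<le> c - \<delta>" by auto
  then show ?thesis
  proof
    assume "c + \<delta> \<le> real i / real m"
    then have "real m * (c + \<delta>) \<le> real i" using mp by (simp add: le_divide_eq mult.commute)
    then have "1 \<le> exp (l * (real i - real m * (c + \<delta>)))" using assms by simp
    then show ?thesis by (smt (verit) exp_gt_zero)
  next
    assume "real i / real m \<le> c - \<delta>"
    then have "real i \<le> real m * (c - \<delta>)" using mp by (simp add: divide_le_eq mult.commute)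
    then have "1 \<le> exp (l * (real m * (c - \<delta>) - real i))" using assms by simp
    then show ?thesis by (smt (verit) exp_gt_zero)
  qed
qed

lemma claim1_core:
  fixes up dn :: "nat \<Rightarrow> real" and m :: nat and c \<delta> \<mu> l :: real
  assumes m: "m \<ge> 1" and \<delta>: "\<delta> > 0" and \<mu>: "0 < \<mu>" "\<mu> \<le> 1" and l_def: "l = \<mu>/2"
  and h1: "\<And>i. i \<le> m \<Longrightarrow> 0 \<le> up i \<and> 0 \<le> dn i \<and> up i + dn i \<le> 1"
  and hm: "up m = 0" and h0: "dn 0 = 0"
  and hd1: "\<And>i. i \<le> m \<Longrightarrow> c + \<delta> \<le> real i / real m \<Longrightarrow> \<mu> \<le> dn i - up i"
  and hd2: "\<And>i. i \<le> m \<Longrightarrow> real i / real m \<le> c - \<delta> \<Longrightarrow> \<mu> \<le> up i - dn i"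
  and big: "exp (- \<mu> * \<delta> * real m) \<le> \<mu>\<^sup>2 / 16"
  shows "i \<le> m \<Longrightarrow> avoid_prob up dn {i. i \<le> m \<and> \<bar>real i / real m - c\<bar> < \<delta>} (Suc n) i
     \<le> (1 - \<mu>\<^sup>2/8) ^ n * (exp (l * (real i - real m * (c + \<delta>))) + exp (l * (real m * (c - \<delta>) - real i)))"
proof (induction n arbitrary: i)
  define V where "V = {i. i \<le> m \<and> \<bar>real i / real m - c\<bar> < \<delta>}"
  define G where "G = (\<lambda>i. exp (l * (real i - real m * (c + \<delta>))) + exp (l * (real m * (c - \<delta>) - real i)))"
  define \<rho> where "\<rho> = 1 - \<mu>\<^sup>2/8"
  have l: "0 \<le> l" using \<mu> l_def by simp
  have \<rho>: "0 \<le> \<rho>" using \<mu> power_le_one[of \<mu> 2] by (simp add: \<rho>_def)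
  have Gp: "0 \<le> G i" for i by (simp add: G_def add_nonneg_nonneg)
  {
    case 0
    show ?case
    proof (cases "i \<in> V")
      case True then show ?thesis by (simp add: V_def[symmetric] Gp[unfolded G_def])
    next
      case False
      then have "\<not> \<bar>real i / real m - c\<bar> < \<delta>" using 0 by (simp add: V_def)
      from one_le_G[OF m l this] False show ?thesis by (simp add: V_def[symmetric])
    qed
  next
    case (Suc n)
    have IH: "j \<le> m \<Longrightarrow> avoid_prob up dn V (Suc n) j \<le> \<rho> ^ n * G j" for j
      using Suc.IH[of j] by (simp add: V_def G_def \<rho>_def)
    have im: "i \<le> m" by fact
    show ?case
    proof (cases "i \<in> V")
      case True then show ?thesis using Gp[of i] \<rho> by (simp add: V_def[symmetric] G_def[symmetric] \<rho>_def[symmetric])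
    next
      case False
      then have out: "\<not> \<bar>real i / real m - c\<bar> < \<delta>" using im by (simp add: V_def)
      have hi: "0 \<le> up i" "0 \<le> dn i" "up i + dn i \<le> 1" using h1[OF im] by auto
      have b1: "up i * avoid_prob up dn V (Suc n) (Suc i) \<le> up i * (\<rho> ^ n * G (Suc i))"
      proof (cases "i < m")
        case True then show ?thesis using IH[of "Suc i"] hi by (intro mult_left_mono) auto
      next
        case False then have "i = m" using im by simp
        then show ?thesis using hm by simp
      qed
      have b2: "dn i * avoid_prob up dn V (Suc n) (i - 1) \<le> dn i * (\<rho> ^ n * G (i - 1))"
      proof (cases "0 < i")
        case True then show ?thesis using IH[of "i - 1"] hi im by (intro mult_left_mono) auto
      next
        case False then have "i = 0" by simp
        then show ?thesis using h0 by simp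
      qed
      have b3: "(1 - up i - dn i) * avoid_prob up dn V (Suc n) i \<le> (1 - up i - dn i) * (\<rho> ^ n * G i)"
        using IH[OF im] hi by (intro mult_left_mono) auto
      have "avoid_prob up dn V (Suc (Suc n)) i = up i * avoid_prob up dn V (Suc n) (Suc i)
          + dn i * avoid_prob up dn V (Suc n) (i - 1) + (1 - up i - dn i) * avoid_prob up dn V (Suc n) i"
        using False by simp
      also have "\<dots> \<le> \<rho> ^ n * (up i * G (Suc i) + dn i * G (i - 1) + (1 - up i - dn i) * G i)"
        using b1 b2 b3 by (simp add: algebra_simps)
      also have "up i * G (Suc i) + dn i * G (i - 1) + (1 - up i - dn i) * G i
         = exp (l * (real i - real m * (c + \<delta>))) * (up i * exp l + dn i * exp (- l) + (1 - up i - dn i))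
         + exp (l * (real m * (c - \<delta>) - real i)) * (up i * exp (- l) + dn i * exp l + (1 - up i - dn i))"
        unfolding G_def by (rule Eg) (use h0 in \<open>cases "i = 0"; auto\<close>)
      also have "\<dots> \<le> \<rho> * G i"
        unfolding G_def \<rho>_def
        by (rule KI[where up=up and dn=dn and i=i, OF m \<delta> \<mu> l_def hi hd1[OF im] hd2[OF im] big out])
      finally have "avoid_prob up dn V (Suc (Suc n)) i \<le> \<rho> ^ n * (\<rho> * G i)"
        using \<rho> by (simp add: mult_left_mono)
      then show ?thesis by (simp add: V_def G_def \<rho>_def algebra_simps)
    qed
  }
qed

lemma one_term:
  fixes T f E :: real
  assumes "0 \<le> T" "0 \<le> f" "f \<le> 2" "C \<Longrightarrow> f \<le> 1" "\<not> C \<Longrightarrow> T \<le> E" "0 \<le> E"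
  shows "T * f \<le> T + E"
proof (cases C)
  case True then have "T * f \<le> T * 1" using assms by (intro mult_left_mono) auto
  then show ?thesis using assms(6) by linarith
next
  case False then have "T * f \<le> T * 2" using assms by (intro mult_left_mono) auto
  then show ?thesis using assms False by simp
qed

lemma KI2:
  fixes up dn :: "nat \<Rightarrow> real" and m :: nat and c \<delta> \<mu> l :: real
  assumes m: "m \<ge> 1" and \<delta>: "\<delta> > 0" and \<mu>: "0 < \<mu>" "\<mu> \<le> 1" and l_def: "l = \<mu>/2"
  and h1: "0 \<le> up i" "0 \<le> dn i" "up i + dn i \<le> 1"
  and hd1: "c + \<delta> \<le> real i / real m \<Longrightarrow> \<mu> \<le> dn i - up i"
  and hd2: "real i / real m \<le> c - \<delta> \<Longrightarrow> \<mu> \<le> up i - dn i"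
  shows "exp (l * (real i - real m * (c + 2 * \<delta>))) * (up i * exp l + dn i * exp (- l) + (1 - up i - dn i))
       + exp (l * (real m * (c - 2 * \<delta>) - real i)) * (up i * exp (- l) + dn i * exp l + (1 - up i - dn i))
     \<le> (exp (l * (real i - real m * (c + 2 * \<delta>))) + exp (l * (real m * (c - 2 * \<delta>) - real i)))
        + 2 * exp (- l * \<delta> * real m)"
proof -
  have l: "0 \<le> l" "l \<le> 1/2" using \<mu> by (auto simp: l_def)
  have mp: "real m > 0" using m by simp
  have sp: "up i * exp l + dn i * exp (- l) + (1 - up i - dn i) \<le> 1 + l * (up i - dn i) + l\<^sup>2 * (up i + dn i)"
    using step_bound[of "up i" "dn i" l] h1 l by auto
  have sm: "up i * exp (- l) + dn i * exp l + (1 - up i - dn i) \<le> 1 + l * (dn i - up i) + l\<^sup>2 * (up i + dn i)"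
    using step_bound[of "dn i" "up i" l] h1 l by (auto simp: algebra_simps)
  have l2: "l\<^sup>2 * (up i + dn i) \<le> l\<^sup>2" using h1 by (intro mult_left_le) auto
  have l2': "l\<^sup>2 \<le> 1/4" using l power_mono[of l "1/2" 2] by (simp add: power2_eq_square)
  have l3: "l\<^sup>2 \<le> l * \<mu>" using l_def \<mu> by (simp add: power2_eq_square)
  have nn1: "0 \<le> up i * exp l + dn i * exp (- l) + (1 - up i - dn i)" using h1 by simp
  have nn2: "0 \<le> up i * exp (- l) + dn i * exp l + (1 - up i - dn i)" using h1 by simp
  have "l * (up i - dn i) \<le> l * 1" using h1 l by (intro mult_left_mono) auto
  then have le2a: "up i * exp l + dn i * exp (- l) + (1 - up i - dn i) \<le> 2" using sp l2 l l2' by linarith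
  have "l * (dn i - up i) \<le> l * 1" using h1 l by (intro mult_left_mono) auto
  then have le2b: "up i * exp (- l) + dn i * exp l + (1 - up i - dn i) \<le> 2" using sm l2 l l2' by linarith
  have c1: "up i * exp l + dn i * exp (- l) + (1 - up i - dn i) \<le> 1" if A: "c + \<delta> \<le> real i / real m"
  proof -
    have "l * \<mu> \<le> l * (dn i - up i)" using hd1[OF A] l by (intro mult_left_mono) auto
    then show ?thesis using sp l2 l3 by (simp add: algebra_simps)
  qed
  have c2: "up i * exp (- l) + dn i * exp l + (1 - up i - dn i) \<le> 1" if A: "real i / real m \<le> c - \<delta>"
  proof -
    have "l * \<mu> \<le> l * (up i - dn i)" using hd2[OF A] l by (intro mult_left_mono) auto
    then show ?thesis using sm l2 l3 by (simp add: algebra_simps)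
  qed
  have e1: "exp (l * (real i - real m * (c + 2 * \<delta>))) \<le> exp (- l * \<delta> * real m)" if A: "\<not> c + \<delta> \<le> real i / real m"
  proof -
    have "real i / real m < c + \<delta>" using A by simp
    then have "real i < (c + \<delta>) * real m" using mp by (simp add: divide_less_eq)
    then have "real i - real m * (c + 2 * \<delta>) \<le> - \<delta> * real m" by (simp add: algebra_simps)
    then have "l * (real i - real m * (c + 2 * \<delta>)) \<le> l * (- \<delta> * real m)" using l by (intro mult_left_mono) auto
    then show ?thesis by simp
  qed
  have e2: "exp (l * (real m * (c - 2 * \<delta>) - real i)) \<le> exp (- l * \<delta> * real m)" if A: "\<not> real i / real m \<le> c - \<delta>"
  proof -
    have "c - \<delta> < real i / real m" using A by simp
    then have "(c - \<delta>) * real m < real i" using mp by (simp add: less_divide_eq)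
    then have "real m * (c - 2 * \<delta>) - real i \<le> - \<delta> * real m" by (simp add: algebra_simps)
    then have "l * (real m * (c - 2 * \<delta>) - real i) \<le> l * (- \<delta> * real m)" using l by (intro mult_left_mono) auto
    then show ?thesis by simp
  qed
  have t1: "exp (l * (real i - real m * (c + 2 * \<delta>))) * (up i * exp l + dn i * exp (- l) + (1 - up i - dn i))
     \<le> exp (l * (real i - real m * (c + 2 * \<delta>))) + exp (- l * \<delta> * real m)"
    by (rule one_term[OF _ nn1 le2a c1 e1]) auto
  have t2: "exp (l * (real m * (c - 2 * \<delta>) - real i)) * (up i * exp (- l) + dn i * exp l + (1 - up i - dn i))
     \<le> exp (l * (real m * (c - 2 * \<delta>) - real i)) + exp (- l * \<delta> * real m)"
    by (rule one_term[OF _ nn2 le2b c2 e2]) auto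
  show ?thesis using t1 t2 by simp
qed

lemma claim2_core:
  fixes up dn :: "nat \<Rightarrow> real" and m :: nat and c \<delta> \<mu> l :: real
  assumes m: "m \<ge> 1" and \<delta>: "\<delta> > 0" and \<mu>: "0 < \<mu>" "\<mu> \<le> 1" and l_def: "l = \<mu>/2"
  and h1: "\<And>i. i \<le> m \<Longrightarrow> 0 \<le> up i \<and> 0 \<le> dn i \<and> up i + dn i \<le> 1"
  and hm: "up m = 0" and h0: "dn 0 = 0"
  and hd1: "\<And>i. i \<le> m \<Longrightarrow> c + \<delta> \<le> real i / real m \<Longrightarrow> \<mu> \<le> dn i - up i"
  and hd2: "\<And>i. i \<le> m \<Longrightarrow> real i / real m \<le> c - \<delta> \<Longrightarrow> \<mu> \<le> up i - dn i"
  shows "i \<le> m \<Longrightarrow> 1 - avoid_prob up dn ({0..m} - {i. i \<le> m \<and> \<bar>real i / real m - c\<bar> < 2 * \<delta>}) n i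
     \<le> (exp (l * (real i - real m * (c + 2 * \<delta>))) + exp (l * (real m * (c - 2 * \<delta>) - real i)))
        + real n * (2 * exp (- l * \<delta> * real m))"
proof (induction n arbitrary: i)
  define A where "A = {0..m} - {i. i \<le> m \<and> \<bar>real i / real m - c\<bar> < 2 * \<delta>}"
  define G where "G = (\<lambda>i. exp (l * (real i - real m * (c + 2 * \<delta>))) + exp (l * (real m * (c - 2 * \<delta>) - real i)))"
  define E where "E = 2 * exp (- l * \<delta> * real m)"
  have l: "0 \<le> l" using \<mu> l_def by simp
  have Gp: "0 \<le> G i" for i by (simp add: G_def add_nonneg_nonneg)
  have Ep: "0 \<le> E" by (simp add: E_def)
  {
    case 0
    show ?case using Gp[of i] by (simp add: G_def)
  next
    case (Suc n)
    have IH: "j \<le> m \<Longrightarrow> 1 - avoid_prob up dn A n j \<le> G j + real n * E" for j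
      using Suc.IH[of j] by (simp add: A_def G_def E_def)
    have im: "i \<le> m" by fact
    show ?case
    proof (cases "i \<in> A")
      case True
      then have "\<not> \<bar>real i / real m - c\<bar> < 2 * \<delta>" by (simp add: A_def)
      from one_le_G[OF m l this] have "1 \<le> G i" by (simp add: G_def)
      moreover have "0 \<le> real (Suc n) * E" using Ep by simp
      moreover have "avoid_prob up dn A (Suc n) i = 0" using True by simp
      ultimately have "1 - avoid_prob up dn A (Suc n) i \<le> G i + real (Suc n) * E" by linarith
      then show ?thesis by (simp add: A_def G_def E_def)
    next
      case False
      have hi: "0 \<le> up i" "0 \<le> dn i" "up i + dn i \<le> 1" using h1[OF im] by auto
      have b1: "up i * (1 - avoid_prob up dn A n (Suc i)) \<le> up i * (G (Suc i) + real n * E)"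
      proof (cases "i < m")
        case True then show ?thesis using IH[of "Suc i"] hi by (intro mult_left_mono) auto
      next
        case False then have "i = m" using im by simp
        then show ?thesis using hm by simp
      qed
      have b2: "dn i * (1 - avoid_prob up dn A n (i - 1)) \<le> dn i * (G (i - 1) + real n * E)"
      proof (cases "0 < i")
        case True then show ?thesis using IH[of "i - 1"] hi im by (intro mult_left_mono) auto
      next
        case False then have "i = 0" by simp
        then show ?thesis using h0 by simp
      qed
      have b3: "(1 - up i - dn i) * (1 - avoid_prob up dn A n i) \<le> (1 - up i - dn i) * (G i + real n * E)"
        using IH[OF im] hi by (intro mult_left_mono) auto
      have "1 - avoid_prob up dn A (Suc n) i = up i * (1 - avoid_prob up dn A n (Suc i))
          + dn i * (1 - avoid_prob up dn A n (i - 1)) + (1 - up i - dn i) * (1 - avoid_prob up dn A n i)"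
        using False by (simp add: algebra_simps)
      also have "\<dots> \<le> (up i * G (Suc i) + dn i * G (i - 1) + (1 - up i - dn i) * G i) + real n * E"
        using b1 b2 b3 by (simp add: algebra_simps)
      also have "up i * G (Suc i) + dn i * G (i - 1) + (1 - up i - dn i) * G i
         = exp (l * (real i - real m * (c + 2 * \<delta>))) * (up i * exp l + dn i * exp (- l) + (1 - up i - dn i))
         + exp (l * (real m * (c - 2 * \<delta>) - real i)) * (up i * exp (- l) + dn i * exp l + (1 - up i - dn i))"
        unfolding G_def by (rule Eg) (use h0 in \<open>cases "i = 0"; auto\<close>)
      also have "\<dots> \<le> G i + E"
        unfolding G_def E_def
        by (rule KI2[where up=up and dn=dn and i=i, OF m \<delta> \<mu> l_def hi hd1[OF im] hd2[OF im]])
      finally have "1 - avoid_prob up dn A (Suc n) i \<le> G i + real (Suc n) * E"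
        by (simp add: algebra_simps)
      then show ?thesis by (simp add: A_def G_def E_def)
    qed
  }
qed



definition FF :: "real \<Rightarrow> (nat \<times> real) filter" where
  "FF a = inf (sequentially \<times>\<^sub>F at_right (0::real)) (filtercomap (\<lambda>(L,q). real L * q) (nhds a))"

lemma FF_ev1: "eventually P (sequentially \<times>\<^sub>F at_right (0::real)) \<Longrightarrow> eventually P (FF a)"
  unfolding FF_def eventually_inf by (intro exI[of _ P] exI[of _ "\<lambda>_. True"]) auto

lemma FF_L: "eventually (\<lambda>(L,q). N \<le> L) (FF a)"
  apply (rule FF_ev1) unfolding eventually_prod_filter
  by (rule exI[of _ "\<lambda>L. N \<le> L"], rule exI[of _ "\<lambda>_. True"]) auto

lemma FF_q: "0 < b \<Longrightarrow> eventually (\<lambda>(L,q). 0 < q \<and> q < b) (FF a)"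
  apply (rule FF_ev1) unfolding eventually_prod_filter
  apply (rule exI[of _ "\<lambda>_. True"], rule exI[of _ "\<lambda>q. 0 < q \<and> q < b"])
  by (auto simp: eventually_at_right_field)

lemma FF_q_tendsto: "((\<lambda>(L,q). q) \<longlongrightarrow> 0) (FF a)"
proof (rule order_tendstoI)
  fix y :: real assume "y < 0"
  show "eventually (\<lambda>x. y < (case x of (L, q) \<Rightarrow> q)) (FF a)"
    by (rule eventually_mono[OF FF_q[of 1 a]]) (use \<open>y < 0\<close> in auto)
next
  fix y :: real assume "0 < y"
  show "eventually (\<lambda>x. (case x of (L, q) \<Rightarrow> q) < y) (FF a)"
    by (rule eventually_mono[OF FF_q[OF \<open>0 < y\<close>, of a]]) auto
qed

lemma FF_Lq_tendsto: "((\<lambda>(L,q). real L * q) \<longlongrightarrow> a) (FF a)"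
proof -
  have "((\<lambda>(L,q). real L * q) \<longlongrightarrow> a) (filtercomap (\<lambda>(L,q). real L * q) (nhds a))"
    by (rule filterlim_filtercomap)
  then show ?thesis unfolding FF_def by (rule filterlim_mono) auto
qed

lemma FF_unpack:
  assumes "eventually P (FF a)"
  shows "\<exists>N. \<exists>\<eta>>0. \<forall>L q. N \<le> L \<and> 0 < q \<and> q < \<eta> \<and> \<bar>real L * q - a\<bar> < \<eta> \<longrightarrow> P (L, q)"
proof -
  obtain Q R where Q: "eventually Q (sequentially \<times>\<^sub>F at_right (0::real))"
    and R: "eventually R (filtercomap (\<lambda>(L,q). real L * q) (nhds a))" and QR: "\<forall>x. Q x \<and> R x \<longrightarrow> P x"
    using assms unfolding FF_def eventually_inf by blast
  obtain Pf Pg where Pf: "eventually Pf sequentially" and Pg: "eventually Pg (at_right (0::real))"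
    and PQ: "\<forall>x y. Pf x \<longrightarrow> Pg y \<longrightarrow> Q (x, y)"
    using Q unfolding eventually_prod_filter by blast
  obtain N where N: "\<forall>n\<ge>N. Pf n" using Pf unfolding eventually_sequentially by blast
  obtain b where b: "b > 0" "\<forall>y>0. y < b \<longrightarrow> Pg y" using Pg unfolding eventually_at_right_field by auto
  obtain R' where R': "eventually R' (nhds a)" and RR: "\<forall>x. R' ((\<lambda>(L,q). real L * q) x) \<longrightarrow> R x"
    using R unfolding eventually_filtercomap by blast
  obtain d where d: "d > 0" "\<forall>y. dist y a < d \<longrightarrow> R' y" using R' unfolding eventually_nhds_metric by blast
  show ?thesis
  proof (intro exI[of _ N] exI[of _ "min b d"] conjI allI impI)
    show "0 < min b d" using b d by simp
    fix L q assume H: "N \<le> L \<and> 0 < q \<and> q < min b d \<and> \<bar>real L * q - a\<bar> < min b d"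
    have "Q (L, q)" using PQ N b H by auto
    moreover have "R (L, q)" using RR d H by (auto simp: dist_real_def)
    ultimately show "P (L, q)" using QR by blast
  qed
qed

lemma FF_Lq_tendsto': "((\<lambda>x. real (fst x) * snd x) \<longlongrightarrow> a) (FF a)"
proof -
  have "(\<lambda>(L,q). real L * q) = (\<lambda>x. real (fst x) * snd x)" by (auto simp: fun_eq_iff)
  then show ?thesis using FF_Lq_tendsto[of a] by simp
qed

lemma FF_q_tendsto': "((\<lambda>x. snd x) \<longlongrightarrow> 0) (FF a)"
proof -
  have "(\<lambda>(L::nat,q::real). q) = (\<lambda>x. snd x)" by (auto simp: fun_eq_iff)
  then show ?thesis using FF_q_tendsto[of a] by simp
qed

lemma FF_nq_tendsto: "((\<lambda>x. real (fst x - d) * snd x) \<longlongrightarrow> a) (FF a)"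
proof (rule Lim_transform_eventually)
  show "((\<lambda>x. real (fst x) * snd x - real d * snd x) \<longlongrightarrow> a) (FF a)"
    using tendsto_diff[OF FF_Lq_tendsto' tendsto_mult[OF tendsto_const FF_q_tendsto', of "real d"]] by simp
  show "eventually (\<lambda>x. real (fst x) * snd x - real d * snd x = real (fst x - d) * snd x) (FF a)"
    by (rule eventually_mono[OF FF_L[of d a]]) (auto simp: of_nat_diff algebra_simps)
qed

lemma one_minus_pow_upper: "0 \<le> q \<Longrightarrow> q \<le> 1 \<Longrightarrow> (1 - q) ^ n \<le> exp (- (real n * q))"
proof -
  assume q: "0 \<le> q" "q \<le> 1"
  have "(1 - q) ^ n \<le> exp (- q) ^ n" using q exp_ge_add_one_self[of "-q"] by (intro power_mono) auto
  also have "\<dots> = exp (- (real n * q))" using exp_of_nat_mult[of n "-q"] by simp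
  finally show ?thesis .
qed

lemma one_minus_pow_lower: "0 < q \<Longrightarrow> q \<le> 1/2 \<Longrightarrow> exp (- (real n * q) - 2 * (real n * q) * q) \<le> (1 - q) ^ n"
proof -
  assume q: "0 < q" "q \<le> 1/2"
  have "ln (1 / (1 - q)) \<le> 1 / (1 - q) - 1" using q by (intro ln_le_minus_one) auto
  then have "- ln (1 - q) \<le> q / (1 - q)" using q by (simp add: ln_div field_simps)
  also have "q / (1 - q) \<le> q + 2 * q\<^sup>2"
  proof -
    have "q \<le> (q + 2 * q\<^sup>2) * (1 - q)"
    proof -
      have "0 \<le> q\<^sup>2 * (1 - 2 * q)" using q by simp
      then show ?thesis by (simp add: algebra_simps power2_eq_square power3_eq_cube)
    qed
    then show ?thesis using q by (simp add: divide_le_eq)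
  qed
  finally have "- q - 2 * q\<^sup>2 \<le> ln (1 - q)" by simp
  then have "exp (- q - 2 * q\<^sup>2) \<le> exp (ln (1 - q))" by simp
  also have "exp (ln (1 - q)) = 1 - q" using q by simp
  finally have "exp (- q - 2 * q\<^sup>2) \<le> 1 - q" .
  then have "exp (- q - 2 * q\<^sup>2) ^ n \<le> (1 - q) ^ n" by (intro power_mono) auto
  also have "exp (- q - 2 * q\<^sup>2) ^ n = exp (- (real n * q) - 2 * (real n * q) * q)"
    using exp_of_nat_mult[of n "- q - 2 * q\<^sup>2"] by (simp add: algebra_simps power2_eq_square)
  finally show ?thesis .
qed

lemma FF_pow_tendsto: "((\<lambda>x. (1 - snd x) ^ (fst x - d)) \<longlongrightarrow> exp (- a)) (FF a)"
proof (rule tendsto_sandwich)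
  show "eventually (\<lambda>x. exp (- (real (fst x - d) * snd x) - 2 * (real (fst x - d) * snd x) * snd x) \<le> (1 - snd x) ^ (fst x - d)) (FF a)"
    by (rule eventually_mono[OF FF_q[of "1/2" a]]) (auto intro!: one_minus_pow_lower)
  show "eventually (\<lambda>x. (1 - snd x) ^ (fst x - d) \<le> exp (- (real (fst x - d) * snd x))) (FF a)"
    by (rule eventually_mono[OF FF_q[of "1/2" a]]) (auto intro!: one_minus_pow_upper)
  show "((\<lambda>x. exp (- (real (fst x - d) * snd x))) \<longlongrightarrow> exp (- a)) (FF a)"
    by (intro tendsto_intros FF_nq_tendsto)
  have "((\<lambda>x. exp (- (real (fst x - d) * snd x) - 2 * (real (fst x - d) * snd x) * snd x)) \<longlongrightarrow> exp (- a - 2 * a * 0)) (FF a)"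
    by (intro tendsto_intros FF_nq_tendsto FF_q_tendsto')
  then show "((\<lambda>x. exp (- (real (fst x - d) * snd x) - 2 * (real (fst x - d) * snd x) * snd x)) \<longlongrightarrow> exp (- a)) (FF a)"
    by simp
qed

lemma binom_q_prod: "real (n choose j) * q ^ j = (\<Prod>i=0..<j. (real n - real i) * q) / fact j"
  by (simp add: binomial_gbinomial gbinomial_prod_rev prod.distrib)

lemma FF_pois: "((\<lambda>x. real ((fst x - b) choose j) * snd x ^ j * (1 - snd x) ^ (fst x - b - j))
   \<longlongrightarrow> exp (- a) * a ^ j / fact j) (FF a)"
proof -
  have p: "((\<lambda>x. \<Prod>i=0..<j. (real (fst x - b) - real i) * snd x) \<longlongrightarrow> (\<Prod>i=0..<j. a)) (FF a)"
  proof (rule tendsto_prod)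
    fix i
    have "((\<lambda>x. real (fst x - b) * snd x - real i * snd x) \<longlongrightarrow> a - real i * 0) (FF a)"
      by (intro tendsto_intros FF_nq_tendsto FF_q_tendsto')
    then show "((\<lambda>x. (real (fst x - b) - real i) * snd x) \<longlongrightarrow> a) (FF a)" by (simp add: algebra_simps)
  qed
  have "((\<lambda>x. (\<Prod>i=0..<j. (real (fst x - b) - real i) * snd x) / fact j * (1 - snd x) ^ (fst x - (b + j)))
      \<longlongrightarrow> (\<Prod>i=0..<j. a) / fact j * exp (- a)) (FF a)"
    by (rule tendsto_mult[OF tendsto_divide[OF p tendsto_const] FF_pow_tendsto]) simp
  moreover have "(\<lambda>x. real ((fst x - b) choose j) * snd x ^ j * (1 - snd x) ^ (fst x - b - j))
     = (\<lambda>x. (\<Prod>i=0..<j. (real (fst x - b) - real i) * snd x) / fact j * (1 - snd x) ^ (fst x - (b + j)))"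
    by (simp only: binom_q_prod diff_diff_left)
  moreover have "(\<Prod>i=0..<j. a) / fact j * exp (- a) = exp (- a) * a ^ j / fact j" by simp
  ultimately show ?thesis by (simp add: mult.commute[of "exp (- a)"])
qed

definition MhS :: "nat \<Rightarrow> real \<Rightarrow> real \<Rightarrow> nat \<Rightarrow> nat \<Rightarrow> nat \<Rightarrow> real" where
  "MhS L \<kappa> q b c l = (if b \<le> c + l then real ((L - b) choose (c + l - b)) * q ^ (c + l - b) * (1 - q) ^ (L - b - (c + l - b))
        * (real (b choose l) * (q / (\<kappa> - 1)) ^ l * (1 - q / (\<kappa> - 1)) ^ (b - l)) else 0)"

lemma Mh_rewrite:
  assumes k: "\<kappa> > 1" and L: "b + c \<le> L"
  shows "Mh L \<kappa> q b c = (\<Sum>l\<in>{0..b}. MhS L \<kappa> q b c l)"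
proof -
  define p where "p = \<kappa> * q / (\<kappa> - 1)"
  have p1: "p * (1 - 1/\<kappa>) = q" using k by (simp add: p_def field_simps)
  have p2: "p / \<kappa> = q / (\<kappa> - 1)" using k by (simp add: p_def field_simps)
  have cond: "(int k' - int l = int c - int b) \<longleftrightarrow> (b \<le> c + l \<and> k' = c + l - b)" for k' l by auto
  have "Mh L \<kappa> q b c = (\<Sum>k'\<in>{0..L - b}. \<Sum>l\<in>{0..b}.
        (if int k' - int l = int c - int b then
           real ((L - b) choose k') * q ^ k' * (1 - q) ^ (L - b - k')
           * real (b choose l) * (q / (\<kappa> - 1)) ^ l * (1 - q / (\<kappa> - 1)) ^ (b - l)
         else 0))"
    unfolding Mh_def Let_def p_def[symmetric] p1 p2 by simp
  also have "\<dots> = (\<Sum>l\<in>{0..b}. \<Sum>k'\<in>{0..L - b}.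
        (if int k' - int l = int c - int b then
           real ((L - b) choose k') * q ^ k' * (1 - q) ^ (L - b - k')
           * real (b choose l) * (q / (\<kappa> - 1)) ^ l * (1 - q / (\<kappa> - 1)) ^ (b - l)
         else 0))" by (rule sum.swap)
  also have "\<dots> = (\<Sum>l\<in>{0..b}. MhS L \<kappa> q b c l)"
  proof (rule sum.cong[OF refl])
    fix l assume l: "l \<in> {0..b}"
    show "(\<Sum>k'\<in>{0..L - b}.
        (if int k' - int l = int c - int b then
           real ((L - b) choose k') * q ^ k' * (1 - q) ^ (L - b - k')
           * real (b choose l) * (q / (\<kappa> - 1)) ^ l * (1 - q / (\<kappa> - 1)) ^ (b - l)
         else 0)) = MhS L \<kappa> q b c l"
    proof (cases "b \<le> c + l")
      case True
      have "c + l - b \<in> {0..L - b}" using L l by auto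
      then show ?thesis using True unfolding cond MhS_def by (simp add: sum.delta' algebra_simps)
    next
      case False then show ?thesis unfolding cond MhS_def by simp
    qed
  qed
  finally show ?thesis .
qed

lemma MhS_tendsto:
  assumes k: "\<kappa> > 1"
  shows "((\<lambda>x. MhS (fst x) \<kappa> (snd x) b c l) \<longlongrightarrow>
     (if b \<le> c + l then exp (- a) * a ^ (c + l - b) / fact (c + l - b) * (real (b choose l) * 0 ^ l) else 0)) (FF a)"
proof (cases "b \<le> c + l")
  case True
  have "((\<lambda>x. real ((fst x - b) choose (c + l - b)) * snd x ^ (c + l - b) * (1 - snd x) ^ (fst x - b - (c + l - b))
        * (real (b choose l) * (snd x / (\<kappa> - 1)) ^ l * (1 - snd x / (\<kappa> - 1)) ^ (b - l)))
     \<longlongrightarrow> exp (- a) * a ^ (c + l - b) / fact (c + l - b) * (real (b choose l) * (0 / (\<kappa> - 1)) ^ l * (1 - 0 / (\<kappa> - 1)) ^ (b - l))) (FF a)"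
    by (intro tendsto_mult FF_pois tendsto_const tendsto_power tendsto_divide tendsto_diff FF_q_tendsto') (use k in auto)
  then show ?thesis using True by (simp add: MhS_def)
next
  case False then show ?thesis by (simp add: MhS_def)
qed

lemma Mh_tendsto:
  assumes k: "\<kappa> > 1"
  shows "((\<lambda>x. Mh (fst x) \<kappa> (snd x) b c) \<longlongrightarrow> (if b \<le> c then exp (- a) * a ^ (c - b) / fact (c - b) else 0)) (FF a)"
proof (rule Lim_transform_eventually)
  have "((\<lambda>x. \<Sum>l\<in>{0..b}. MhS (fst x) \<kappa> (snd x) b c l) \<longlongrightarrow>
     (\<Sum>l\<in>{0..b}. if b \<le> c + l then exp (- a) * a ^ (c + l - b) / fact (c + l - b) * (real (b choose l) * 0 ^ l) else 0)) (FF a)"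
    by (intro tendsto_sum MhS_tendsto k)
  moreover have "(\<Sum>l\<in>{0..b}. if b \<le> c + l then exp (- a) * a ^ (c + l - b) / fact (c + l - b) * (real (b choose l) * 0 ^ l) else 0)
     = (if b \<le> c then exp (- a) * a ^ (c - b) / fact (c - b) else 0)"
  proof -
    have "{0..b} = insert 0 {1..b}" by auto
    moreover have "(\<Sum>l\<in>{1..b}. if b \<le> c + l then exp (- a) * a ^ (c + l - b) / fact (c + l - b) * (real (b choose l) * 0 ^ l) else (0::real)) = 0"
      by (intro sum.neutral) auto
    ultimately show ?thesis by simp
  qed
  ultimately show "((\<lambda>x. \<Sum>l\<in>{0..b}. MhS (fst x) \<kappa> (snd x) b c l) \<longlongrightarrow> (if b \<le> c then exp (- a) * a ^ (c - b) / fact (c - b) else 0)) (FF a)"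
    by simp
  show "eventually (\<lambda>x. (\<Sum>l\<in>{0..b}. MhS (fst x) \<kappa> (snd x) b c l) = Mh (fst x) \<kappa> (snd x) b c) (FF a)"
    by (rule eventually_mono[OF FF_L[of "b + c" a]]) (auto simp: Mh_rewrite[OF k])
qed



definition AA :: "real \<Rightarrow> nat \<Rightarrow> (nat \<Rightarrow> real) \<Rightarrow> (nat \<Rightarrow> real) \<Rightarrow> real \<Rightarrow> real \<Rightarrow> real" where
  "AA \<sigma> k \<rho> M e x = \<sigma> * \<rho> 0 * M 0 + (\<Sum>l\<in>{1..k-1}. \<rho> l * M l) + x * M k + (1 - (\<Sum>l<k. \<rho> l) - x) * e"

definition DD :: "real \<Rightarrow> (nat \<Rightarrow> real) \<Rightarrow> real" where
  "DD \<sigma> \<rho> = (\<sigma> - 1) * \<rho> 0 + 1"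

lemma delta_fn_AA:
  "delta_fn \<sigma> \<kappa> L q m k th \<rho> i = (if i < m then (1 - real i / real m) *
     (AA \<sigma> k \<rho> (\<lambda>l. Mh L \<kappa> q l k) (eps_theta L \<kappa> q k th) (real i / real m) / DD \<sigma> \<rho>) else 0)"
  by (simp add: delta_fn_def AA_def DD_def)

lemma sum_split_k: fixes k :: nat and \<rho> :: "nat \<Rightarrow> real" shows "1 \<le> k \<Longrightarrow> (\<Sum>l<k. \<rho> l) = \<rho> 0 + (\<Sum>l\<in>{1..k-1}. \<rho> l)"
proof -
  assume k: "1 \<le> k"
  have "{..<k} = insert 0 {1..k-1}" using k by (cases k) auto
  then show ?thesis by simp
qed

lemma gamma_fn_AA:
  assumes k: "1 \<le> k" and D: "DD \<sigma> \<rho> \<noteq> 0"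
  shows "gamma_fn \<sigma> \<kappa> L q m k th \<rho> i = (if 0 < i then (real i / real m) *
     (1 - AA \<sigma> k \<rho> (\<lambda>l. Mh L \<kappa> q l k) (eps_theta L \<kappa> q k th) (real i / real m) / DD \<sigma> \<rho>) else 0)"
proof -
  define M where "M = (\<lambda>l. Mh L \<kappa> q l k)"
  define e where "e = eps_theta L \<kappa> q k th"
  define x where "x = real i / real m"
  have "\<sigma> * \<rho> 0 * (1 - M 0) + (\<Sum>l\<in>{1..k-1}. \<rho> l * (1 - M l)) + x * (1 - M k) + (1 - (\<Sum>l<k. \<rho> l) - x) * (1 - e)
      = DD \<sigma> \<rho> - AA \<sigma> k \<rho> M e x"
    unfolding AA_def DD_def sum_split_k[OF k] by (simp add: algebra_simps sum_subtractf)
  moreover have "(\<sigma> - 1) * \<rho> 0 + 1 = DD \<sigma> \<rho>" by (simp add: DD_def)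
  ultimately have "gamma_fn \<sigma> \<kappa> L q m k th \<rho> i = (if 0 < i then x / DD \<sigma> \<rho> * (DD \<sigma> \<rho> - AA \<sigma> k \<rho> M e x) else 0)"
    unfolding gamma_fn_def M_def e_def x_def by simp
  also have "x / DD \<sigma> \<rho> * (DD \<sigma> \<rho> - AA \<sigma> k \<rho> M e x) = x * (1 - AA \<sigma> k \<rho> M e x / DD \<sigma> \<rho>)"
    using D by (simp add: field_simps)
  finally show ?thesis by (simp add: M_def e_def x_def)
qed

lemma prod_close:
  fixes r rs M Ms e eM :: real
  assumes "\<bar>r\<bar> \<le> 1" "\<bar>Ms\<bar> \<le> 1" "\<bar>r - rs\<bar> \<le> e" "\<bar>M - Ms\<bar> \<le> eM"
  shows "\<bar>r * M - rs * Ms\<bar> \<le> e + eM"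
proof -
  have "r * M - rs * Ms = r * (M - Ms) + (r - rs) * Ms" by (simp add: algebra_simps)
  also have "\<bar>\<dots>\<bar> \<le> \<bar>r\<bar> * \<bar>M - Ms\<bar> + \<bar>r - rs\<bar> * \<bar>Ms\<bar>" by (metis abs_mult abs_triangle_ineq)
  also have "\<bar>r\<bar> * \<bar>M - Ms\<bar> \<le> 1 * eM" using assms by (intro mult_mono) auto
  also have "\<bar>r - rs\<bar> * \<bar>Ms\<bar> \<le> e * 1" using assms by (intro mult_mono) auto
  finally show ?thesis by simp
qed

lemma r_close:
  fixes \<rho> \<rho>s M Ms :: "nat \<Rightarrow> real" and \<sigma> x e eM \<epsilon> :: real and k :: nat
  assumes k: "1 \<le> k" and \<sigma>: "1 < \<sigma>" and x: "0 \<le> x" "x \<le> 1"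
  and \<rho>: "\<And>i. i < k \<Longrightarrow> 0 \<le> \<rho> i \<and> \<rho> i \<le> 1"
  and \<rho>s: "\<And>i. i < k \<Longrightarrow> 0 \<le> \<rho>s i \<and> \<rho>s i \<le> 1"
  and d\<rho>: "\<And>i. i < k \<Longrightarrow> \<bar>\<rho> i - \<rho>s i\<bar> \<le> e"
  and Ms: "\<And>l. l \<le> k \<Longrightarrow> 0 \<le> Ms l \<and> Ms l \<le> 1"
  and dM: "\<And>l. l \<le> k \<Longrightarrow> \<bar>M l - Ms l\<bar> \<le> eM"
  and d\<epsilon>: "\<bar>\<epsilon>\<bar> \<le> eM"
  shows "\<bar>AA \<sigma> k \<rho> M \<epsilon> x / DD \<sigma> \<rho> - AA \<sigma> k \<rho>s Ms 0 x / DD \<sigma> \<rho>s\<bar> \<le> 2 * \<sigma> * (\<sigma> + 2 * real k + 3) * (e + eM)"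
proof -
  have k0: "0 < k" using k by simp
  have e0: "0 \<le> e" using d\<rho>[OF k0] by linarith
  have eM0: "0 \<le> eM" using d\<epsilon> by linarith
  define A where "A = AA \<sigma> k \<rho> M \<epsilon> x"
  define As where "As = AA \<sigma> k \<rho>s Ms 0 x"
  define D where "D = DD \<sigma> \<rho>"
  define Ds where "Ds = DD \<sigma> \<rho>s"
  have D1: "1 \<le> D" using \<rho>[OF k0] \<sigma> by (simp add: D_def DD_def)
  have Ds1: "1 \<le> Ds" using \<rho>s[OF k0] \<sigma> by (simp add: Ds_def DD_def)
  have "(\<sigma> - 1) * \<rho>s 0 \<le> (\<sigma> - 1) * 1" using \<rho>s[OF k0] \<sigma> by (intro mult_left_mono) auto
  then have Dsle: "Ds \<le> \<sigma>" by (simp add: Ds_def DD_def)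
  have dD: "\<bar>D - Ds\<bar> \<le> \<sigma> * e"
  proof -
    have "\<bar>D - Ds\<bar> = (\<sigma> - 1) * \<bar>\<rho> 0 - \<rho>s 0\<bar>" using \<sigma> by (simp add: D_def Ds_def DD_def abs_mult flip: right_diff_distrib)
    also have "\<dots> \<le> \<sigma> * e" using d\<rho>[OF k0] \<sigma> e0 by (intro mult_mono) auto
    finally show ?thesis .
  qed
  have As0: "0 \<le> As"
  proof -
    have "0 \<le> (1 - (\<Sum>l<k. \<rho>s l) - x) * 0" by simp
    moreover have "0 \<le> (\<Sum>l\<in>{1..k-1}. \<rho>s l * Ms l)" using \<rho>s Ms by (intro sum_nonneg) auto
    ultimately show ?thesis unfolding As_def AA_def using \<rho>s[OF k0] Ms[of 0] Ms[of k] x \<sigma> by simp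
  qed
  have Asle: "As \<le> \<sigma> + real k"
  proof -
    have "\<sigma> * \<rho>s 0 * Ms 0 \<le> \<sigma> * 1 * 1" using \<rho>s[OF k0] Ms[of 0] \<sigma> by (intro mult_mono) auto
    moreover have "(\<Sum>l\<in>{1..k-1}. \<rho>s l * Ms l) \<le> (\<Sum>l\<in>{1..k-1}. 1)"
      using \<rho>s Ms by (intro sum_mono) (auto intro: mult_le_one)
    moreover have "x * Ms k \<le> 1" using x Ms[of k] by (auto intro: mult_le_one)
    ultimately have "As \<le> \<sigma> + real (k - 1) + 1" unfolding As_def AA_def by simp
    then show ?thesis using k by (simp add: of_nat_diff)
  qed
  have dA: "\<bar>A - As\<bar> \<le> (\<sigma> + 2 * real k + 3) * (e + eM)"
  proof -
    have t1: "\<bar>\<sigma> * \<rho> 0 * M 0 - \<sigma> * \<rho>s 0 * Ms 0\<bar> \<le> \<sigma> * (e + eM)"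
    proof -
      have "\<bar>\<rho> 0 * M 0 - \<rho>s 0 * Ms 0\<bar> \<le> e + eM" using \<rho>[OF k0] Ms[of 0] d\<rho>[OF k0] dM[of 0] by (intro prod_close) auto
      then have "\<sigma> * \<bar>\<rho> 0 * M 0 - \<rho>s 0 * Ms 0\<bar> \<le> \<sigma> * (e + eM)" using \<sigma> by (intro mult_left_mono) auto
      moreover have "\<sigma> * \<rho> 0 * M 0 - \<sigma> * \<rho>s 0 * Ms 0 = \<sigma> * (\<rho> 0 * M 0 - \<rho>s 0 * Ms 0)" by (simp add: algebra_simps)
      ultimately show ?thesis using \<sigma> by (simp add: abs_mult)
    qed
    have t2: "\<bar>(\<Sum>l\<in>{1..k-1}. \<rho> l * M l) - (\<Sum>l\<in>{1..k-1}. \<rho>s l * Ms l)\<bar> \<le> real k * (e + eM)"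
    proof -
      have "\<bar>(\<Sum>l\<in>{1..k-1}. \<rho> l * M l) - (\<Sum>l\<in>{1..k-1}. \<rho>s l * Ms l)\<bar> = \<bar>\<Sum>l\<in>{1..k-1}. \<rho> l * M l - \<rho>s l * Ms l\<bar>"
        by (simp add: sum_subtractf)
      also have "\<dots> \<le> (\<Sum>l\<in>{1..k-1}. \<bar>\<rho> l * M l - \<rho>s l * Ms l\<bar>)" by (rule sum_abs)
      also have "\<dots> \<le> (\<Sum>l\<in>{1..k-1}. e + eM)"
      proof (rule sum_mono)
        fix l assume "l \<in> {1..k-1}" then have "l < k" by auto
        then show "\<bar>\<rho> l * M l - \<rho>s l * Ms l\<bar> \<le> e + eM" using \<rho> Ms d\<rho> dM by (intro prod_close) auto
      qed
      also have "\<dots> = real (k - 1) * (e + eM)" by simp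
      also have "\<dots> \<le> real k * (e + eM)" using e0 eM0 by (intro mult_right_mono) auto
      finally show ?thesis .
    qed
    have t3: "\<bar>x * M k - x * Ms k\<bar> \<le> e + eM"
    proof -
      have "\<bar>x * M k - x * Ms k\<bar> = x * \<bar>M k - Ms k\<bar>" using x by (simp add: abs_mult flip: right_diff_distrib)
      also have "\<dots> \<le> 1 * eM" using x dM[of k] by (intro mult_mono) auto
      finally show ?thesis using e0 by simp
    qed
    have t4: "\<bar>(1 - (\<Sum>l<k. \<rho> l) - x) * \<epsilon>\<bar> \<le> (real k + 2) * (e + eM)"
    proof -
      have S: "0 \<le> (\<Sum>l<k. \<rho> l)" "(\<Sum>l<k. \<rho> l) \<le> real k"
        using \<rho> sum_mono[of "{..<k}" \<rho> "\<lambda>_. 1"] by (auto intro: sum_nonneg)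
      have "\<bar>1 - (\<Sum>l<k. \<rho> l) - x\<bar> \<le> real k + 2" using S x by linarith
      then have "\<bar>(1 - (\<Sum>l<k. \<rho> l) - x) * \<epsilon>\<bar> \<le> (real k + 2) * eM" unfolding abs_mult
        using d\<epsilon> by (intro mult_mono) auto
      also have "\<dots> \<le> (real k + 2) * (e + eM)" using e0 by (intro mult_left_mono) auto
      finally show ?thesis .
    qed
    have "A - As = (\<sigma> * \<rho> 0 * M 0 - \<sigma> * \<rho>s 0 * Ms 0) + ((\<Sum>l\<in>{1..k-1}. \<rho> l * M l) - (\<Sum>l\<in>{1..k-1}. \<rho>s l * Ms l))
        + (x * M k - x * Ms k) + (1 - (\<Sum>l<k. \<rho> l) - x) * \<epsilon>"
      by (simp add: A_def As_def AA_def)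
    then have "\<bar>A - As\<bar> \<le> \<sigma> * (e + eM) + real k * (e + eM) + (e + eM) + (real k + 2) * (e + eM)"
      using t1 t2 t3 t4 by linarith
    then show ?thesis by (simp add: algebra_simps)
  qed
  have "A / D - As / Ds = ((A - As) * Ds - As * (D - Ds)) / (D * Ds)"
    using D1 Ds1 by (simp add: field_simps)
  then have "\<bar>A / D - As / Ds\<bar> = \<bar>(A - As) * Ds - As * (D - Ds)\<bar> / (D * Ds)"
    using D1 Ds1 by (simp add: abs_div)
  also have "\<dots> \<le> \<bar>(A - As) * Ds - As * (D - Ds)\<bar>"
  proof -
    have DDs: "1 \<le> D * Ds" using D1 Ds1 mult_mono[of 1 D 1 Ds] by simp
    have "\<bar>(A - As) * Ds - As * (D - Ds)\<bar> / (D * Ds) \<le> \<bar>(A - As) * Ds - As * (D - Ds)\<bar> / 1"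
      using DDs by (intro divide_left_mono) auto
    then show ?thesis by simp
  qed
  also have "\<dots> \<le> \<bar>A - As\<bar> * Ds + As * \<bar>D - Ds\<bar>"
  proof -
    have "\<bar>(A - As) * Ds - As * (D - Ds)\<bar> \<le> \<bar>(A - As) * Ds\<bar> + \<bar>As * (D - Ds)\<bar>" by (rule abs_triangle_ineq4)
    also have "\<bar>(A - As) * Ds\<bar> = \<bar>A - As\<bar> * Ds" using Ds1 by (simp add: abs_mult)
    also have "\<bar>As * (D - Ds)\<bar> = As * \<bar>D - Ds\<bar>" using As0 by (simp add: abs_mult)
    finally show ?thesis .
  qed
  also have "\<bar>A - As\<bar> * Ds \<le> ((\<sigma> + 2 * real k + 3) * (e + eM)) * \<sigma>"
    using dA Dsle Ds1 by (intro mult_mono) auto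
  also have "As * \<bar>D - Ds\<bar> \<le> (\<sigma> + real k) * (\<sigma> * e)"
    using Asle dD As0 by (intro mult_mono) auto
  also have "(\<sigma> + 2 * real k + 3) * (e + eM) * \<sigma> + (\<sigma> + real k) * (\<sigma> * e) \<le> 2 * \<sigma> * (\<sigma> + 2 * real k + 3) * (e + eM)"
  proof -
    have "(\<sigma> + real k) * (\<sigma> * e) \<le> (\<sigma> + 2 * real k + 3) * (\<sigma> * (e + eM))"
      using \<sigma> e0 eM0 by (intro mult_mono) auto
    then show ?thesis by (simp add: algebra_simps)
  qed
  finally show ?thesis by (simp add: A_def As_def D_def Ds_def)
qed



definition Mlim :: "real \<Rightarrow> nat \<Rightarrow> nat \<Rightarrow> real" where
  "Mlim a k l = (if l \<le> k then exp (- a) * a ^ (k - l) / fact (k - l) else 0)"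

lemma Mlim_bounds: "0 < a \<Longrightarrow> 0 \<le> Mlim a k l \<and> Mlim a k l \<le> 1"
proof -
  assume a: "0 < a"
  have "a ^ (k - l) \<le> fact (k - l) * exp a" using a by (intro pow_le_fact_exp) simp
  then have "a ^ (k - l) / fact (k - l) \<le> exp a" by (simp add: divide_le_eq mult.commute)
  then have "exp (- a) * (a ^ (k - l) / fact (k - l)) \<le> exp (- a) * exp a" by (intro mult_left_mono) auto
  also have "\<dots> = 1" by (simp flip: exp_add)
  finally show ?thesis using a by (simp add: Mlim_def)
qed

lemma rho_star_0: "\<sigma> > 1 \<Longrightarrow> rho_star \<sigma> a 0 = (\<sigma> * exp (- a) - 1) / (\<sigma> - 1)"
  by (simp add: rho_star_Tser Tser_0)

lemma rho_star_le1:
  assumes a: "a > 0" and sa: "\<sigma> * exp (- a) > 1"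
  shows "rho_star \<sigma> a i \<le> 1"
proof (cases "i = 0")
  case True
  have s: "\<sigma> > 1" by (rule sigma_gt1[OF a sa])
  have "exp (-a) < 1" using exp_less_cancel_iff[of "-a" 0] a by simp
  then have "\<sigma> * exp (- a) \<le> \<sigma> * 1" using s by (intro mult_left_mono) auto
  then show ?thesis using True s by (simp add: rho_star_0 divide_le_eq)
next
  case False then show ?thesis using rho_star_lt1[OF a sa, of i] by simp
qed

lemma r_inf:
  assumes a: "a > 0" and sa: "\<sigma> * exp (- a) > 1" and k: "1 \<le> k"
  shows "AA \<sigma> k (rho_star \<sigma> a) (Mlim a k) 0 x / DD \<sigma> (rho_star \<sigma> a) = (rho_star \<sigma> a k * (\<sigma> - 1) + x) / \<sigma>"
proof -
  have s: "\<sigma> > 1" by (rule sigma_gt1[OF a sa])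
  have "AA \<sigma> k (rho_star \<sigma> a) (Mlim a k) 0 x = exp (- a) * (\<sigma> * rho_star \<sigma> a 0 * (a ^ k / fact k)
     + (\<Sum>l\<in>{1..k-1}. rho_star \<sigma> a l * (a ^ (k - l) / fact (k - l)))) + x * exp (- a)"
  proof -
    have "(\<Sum>l\<in>{1..k-1}. rho_star \<sigma> a l * Mlim a k l) = exp (- a) * (\<Sum>l\<in>{1..k-1}. rho_star \<sigma> a l * (a ^ (k - l) / fact (k - l)))"
      unfolding sum_distrib_left by (rule sum.cong) (auto simp: Mlim_def)
    then show ?thesis by (simp add: AA_def Mlim_def algebra_simps)
  qed
  also have "\<dots> = exp (- a) * (rho_star \<sigma> a k * (\<sigma> - 1)) + x * exp (- a)" by (simp only: rho_ident[OF s k])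
  also have "\<dots> = exp (- a) * (rho_star \<sigma> a k * (\<sigma> - 1) + x)" by (simp add: algebra_simps)
  finally have A: "AA \<sigma> k (rho_star \<sigma> a) (Mlim a k) 0 x = exp (- a) * (rho_star \<sigma> a k * (\<sigma> - 1) + x)" .
  have D: "DD \<sigma> (rho_star \<sigma> a) = \<sigma> * exp (- a)" using s by (simp add: DD_def rho_star_0)
  show ?thesis using A D by simp
qed

lemma sup_inf_in:
  fixes f :: "'b \<Rightarrow> real"
  assumes "W \<noteq> {}" "\<And>w. w \<in> W \<Longrightarrow> lo \<le> f w \<and> f w \<le> hi"
  shows "lo \<le> Sup (f ` W) \<and> Sup (f ` W) \<le> hi \<and> lo \<le> Inf (f ` W) \<and> Inf (f ` W) \<le> hi"
proof -
  obtain w where w: "w \<in> W" using assms by auto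
  have bu: "bdd_above (f ` W)" by (rule bdd_aboveI2[of W f hi]) (use assms in auto)
  have bl: "bdd_below (f ` W)" by (rule bdd_belowI2[of W lo f]) (use assms in auto)
  have "f w \<le> Sup (f ` W)" using w bu by (intro cSup_upper) auto
  moreover have "Sup (f ` W) \<le> hi" using assms by (intro cSup_least) auto
  moreover have "Inf (f ` W) \<le> f w" using w bl by (intro cInf_lower) auto
  moreover have "lo \<le> Inf (f ` W)" using assms by (intro cInf_greatest) auto
  ultimately show ?thesis using assms w by force
qed

lemma rates_interval:
  fixes \<sigma> a \<kappa> q \<delta>' eM \<epsilon>r :: real and L m k i :: nat and th \<rho>
  assumes a: "a > 0" and sa: "\<sigma> * exp (- a) > 1" and k: "1 \<le> k" and m: "1 \<le> m" and i: "i \<le> m"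
  and W: "\<rho> \<in> Wset \<sigma> a k \<delta>'"
  and dM: "\<And>l. l \<le> k \<Longrightarrow> \<bar>Mh L \<kappa> q l k - Mlim a k l\<bar> \<le> eM"
  and d\<epsilon>: "\<bar>eps_theta L \<kappa> q k th\<bar> \<le> eM"
  and small: "2 * \<sigma> * (\<sigma> + 2 * real k + 3) * (2 * \<delta>' + eM) \<le> \<epsilon>r"
  shows "(1 - real i / real m) * ((rho_star \<sigma> a k * (\<sigma> - 1) + real i / real m) / \<sigma> - \<epsilon>r) \<le> delta_fn \<sigma> \<kappa> L q m k th \<rho> i
   \<and> delta_fn \<sigma> \<kappa> L q m k th \<rho> i \<le> (1 - real i / real m) * ((rho_star \<sigma> a k * (\<sigma> - 1) + real i / real m) / \<sigma> + \<epsilon>r)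
   \<and> (real i / real m) * (1 - (rho_star \<sigma> a k * (\<sigma> - 1) + real i / real m) / \<sigma> - \<epsilon>r) \<le> gamma_fn \<sigma> \<kappa> L q m k th \<rho> i
   \<and> gamma_fn \<sigma> \<kappa> L q m k th \<rho> i \<le> (real i / real m) * (1 - (rho_star \<sigma> a k * (\<sigma> - 1) + real i / real m) / \<sigma> + \<epsilon>r)"
proof -
  define x where "x = real i / real m"
  define ri where "ri = (rho_star \<sigma> a k * (\<sigma> - 1) + x) / \<sigma>"
  define r where "r = AA \<sigma> k \<rho> (\<lambda>l. Mh L \<kappa> q l k) (eps_theta L \<kappa> q k th) x / DD \<sigma> \<rho>"
  have s: "\<sigma> > 1" by (rule sigma_gt1[OF a sa])
  have mp: "real m > 0" using m by simp
  have x: "0 \<le> x" "x \<le> 1" using i mp by (auto simp: x_def divide_le_eq)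
  have \<rho>: "\<And>j. j < k \<Longrightarrow> 0 \<le> \<rho> j \<and> \<rho> j \<le> 1" and d\<rho>: "\<And>j. j < k \<Longrightarrow> \<bar>\<rho> j - rho_star \<sigma> a j\<bar> \<le> 2 * \<delta>'"
    using W by (auto simp: Wset_def less_imp_le)
  have \<rho>s: "\<And>j. j < k \<Longrightarrow> 0 \<le> rho_star \<sigma> a j \<and> rho_star \<sigma> a j \<le> 1"
    using rho_star_pos[OF a sa] rho_star_le1[OF a sa] less_imp_le by blast
  have "\<bar>r - AA \<sigma> k (rho_star \<sigma> a) (Mlim a k) 0 x / DD \<sigma> (rho_star \<sigma> a)\<bar> \<le> 2 * \<sigma> * (\<sigma> + 2 * real k + 3) * (2 * \<delta>' + eM)"
    unfolding r_def by (rule r_close[OF k s x \<rho> \<rho>s d\<rho> Mlim_bounds[OF a] dM d\<epsilon>])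
  then have close: "\<bar>r - ri\<bar> \<le> \<epsilon>r" using small unfolding r_inf[OF a sa k] ri_def by linarith
  have D: "DD \<sigma> \<rho> \<noteq> 0" using \<rho>[of 0] k s by (simp add: DD_def) (smt (verit) mult_nonneg_nonneg)
  have dl: "(1 - x) * (ri - \<epsilon>r) \<le> delta_fn \<sigma> \<kappa> L q m k th \<rho> i \<and> delta_fn \<sigma> \<kappa> L q m k th \<rho> i \<le> (1 - x) * (ri + \<epsilon>r)"
  proof (cases "i < m")
    case True
    then have eq: "delta_fn \<sigma> \<kappa> L q m k th \<rho> i = (1 - x) * r" by (simp add: delta_fn_AA x_def r_def)
    have "(1 - x) * (ri - \<epsilon>r) \<le> (1 - x) * r" using close x by (intro mult_left_mono) auto
    moreover have "(1 - x) * r \<le> (1 - x) * (ri + \<epsilon>r)" using close x by (intro mult_left_mono) auto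
    ultimately show ?thesis using eq by simp
  next
    case False then have "i = m" using i by simp
    then show ?thesis using mp by (simp add: delta_fn_AA x_def)
  qed
  have gl: "x * (1 - ri - \<epsilon>r) \<le> gamma_fn \<sigma> \<kappa> L q m k th \<rho> i \<and> gamma_fn \<sigma> \<kappa> L q m k th \<rho> i \<le> x * (1 - ri + \<epsilon>r)"
  proof (cases "0 < i")
    case True
    then have eq: "gamma_fn \<sigma> \<kappa> L q m k th \<rho> i = x * (1 - r)" by (simp add: gamma_fn_AA[OF k D] x_def r_def)
    have "x * (1 - ri - \<epsilon>r) \<le> x * (1 - r)" using close x by (intro mult_left_mono) auto
    moreover have "x * (1 - r) \<le> x * (1 - ri + \<epsilon>r)" using close x by (intro mult_left_mono) auto
    ultimately show ?thesis using eq by simp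
  next
    case False then have "i = 0" by simp
    then show ?thesis by (simp add: gamma_fn_AA[OF k D] x_def)
  qed
  show ?thesis using dl gl by (simp add: x_def ri_def)
qed

definition rinf :: "real \<Rightarrow> real \<Rightarrow> real \<Rightarrow> real" where
  "rinf \<sigma> c x = (c * (\<sigma> - 1) + x) / \<sigma>"

lemma props_from_interval:
  fixes up dn :: "nat \<Rightarrow> real" and m :: nat and c \<sigma> \<epsilon>r \<mu> \<delta> :: real
  assumes m: "1 \<le> m" and s: "\<sigma> > 1"
  and I: "\<And>i. i \<le> m \<Longrightarrow> (1 - real i / real m) * (rinf \<sigma> c (real i / real m) - \<epsilon>r) \<le> up i
      \<and> up i \<le> (1 - real i / real m) * (rinf \<sigma> c (real i / real m) + \<epsilon>r)
      \<and> (real i / real m) * (1 - rinf \<sigma> c (real i / real m) - \<epsilon>r) \<le> dn i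
      \<and> dn i \<le> (real i / real m) * (1 - rinf \<sigma> c (real i / real m) + \<epsilon>r)"
  and e1: "\<epsilon>r \<le> (\<sigma> - 1) * c / \<sigma>" and e2: "\<epsilon>r \<le> (\<sigma> - 1) * (1 - c) / \<sigma>"
  and \<mu>d: "\<mu> \<le> (\<sigma> - 1) * \<delta> / \<sigma> - \<epsilon>r"
  shows "\<And>i. i \<le> m \<Longrightarrow> 0 \<le> up i \<and> 0 \<le> dn i \<and> up i + dn i \<le> 1"
    and "up m = 0" and "dn 0 = 0"
    and "\<And>i. i \<le> m \<Longrightarrow> c + \<delta> \<le> real i / real m \<Longrightarrow> \<mu> \<le> dn i - up i"
    and "\<And>i. i \<le> m \<Longrightarrow> real i / real m \<le> c - \<delta> \<Longrightarrow> \<mu> \<le> up i - dn i"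
proof -
  have mp: "real m > 0" using m by simp
  have rlo: "\<epsilon>r \<le> rinf \<sigma> c x" if "0 \<le> x" for x
  proof -
    have "(\<sigma> - 1) * c / \<sigma> \<le> (c * (\<sigma> - 1) + x) / \<sigma>" using that s by (intro divide_right_mono) (auto simp: algebra_simps)
    then show ?thesis using e1 by (simp add: rinf_def)
  qed
  have rhi: "\<epsilon>r \<le> 1 - rinf \<sigma> c x" if "x \<le> 1" for x
  proof -
    have "(c * (\<sigma> - 1) + x) / \<sigma> \<le> (c * (\<sigma> - 1) + 1) / \<sigma>" using that s by (intro divide_right_mono) auto
    moreover have "1 - (c * (\<sigma> - 1) + 1) / \<sigma> = (\<sigma> - 1) * (1 - c) / \<sigma>" using s by (simp add: field_simps)
    ultimately show ?thesis using e2 by (simp add: rinf_def)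
  qed
  have drift: "rinf \<sigma> c x - x = (\<sigma> - 1) * (c - x) / \<sigma>" for x using s by (simp add: rinf_def field_simps)
  {
    fix i assume i: "i \<le> m"
    define x where "x = real i / real m"
    have x: "0 \<le> x" "x \<le> 1" using i mp by (auto simp: x_def divide_le_eq)
    note Ii = I[OF i, folded x_def]
    have "0 \<le> (1 - x) * (rinf \<sigma> c x - \<epsilon>r)" using x rlo[OF x(1)] by simp
    moreover have "0 \<le> x * (1 - rinf \<sigma> c x - \<epsilon>r)" using x rhi[OF x(2)] by simp
    moreover have "(1 - x) * (rinf \<sigma> c x + \<epsilon>r) + x * (1 - rinf \<sigma> c x + \<epsilon>r) \<le> 1"
    proof -
      have "(1 - x) * rinf \<sigma> c x \<le> (1 - x) * (1 - \<epsilon>r)" using x rhi[OF x(2)] by (intro mult_left_mono) auto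
      moreover have "x * (1 - rinf \<sigma> c x) \<le> x * (1 - \<epsilon>r)" using x rlo[OF x(1)] by (intro mult_left_mono) auto
      ultimately show ?thesis by (simp add: algebra_simps)
    qed
    ultimately show "0 \<le> up i \<and> 0 \<le> dn i \<and> up i + dn i \<le> 1" using Ii by linarith
  }
  show "up m = 0" using I[of m] mp by simp
  show "dn 0 = 0" using I[of 0] by simp
  {
    fix i assume i: "i \<le> m" and A: "c + \<delta> \<le> real i / real m"
    define x where "x = real i / real m"
    note Ii = I[OF i, folded x_def]
    have "x * (1 - rinf \<sigma> c x - \<epsilon>r) - (1 - x) * (rinf \<sigma> c x + \<epsilon>r) = x - rinf \<sigma> c x - \<epsilon>r" by (simp add: algebra_simps)
    moreover have "(\<sigma> - 1) * \<delta> / \<sigma> \<le> x - rinf \<sigma> c x"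
    proof -
      have "(\<sigma> - 1) * \<delta> \<le> (\<sigma> - 1) * (x - c)" using A s by (intro mult_left_mono) (auto simp: x_def)
      then have "(\<sigma> - 1) * \<delta> / \<sigma> \<le> (\<sigma> - 1) * (x - c) / \<sigma>" using s by (intro divide_right_mono) auto
      moreover have "x - rinf \<sigma> c x = (\<sigma> - 1) * (x - c) / \<sigma>" using s by (simp add: rinf_def field_simps)
      ultimately show ?thesis by simp
    qed
    ultimately show "\<mu> \<le> dn i - up i" using Ii \<mu>d by linarith
  }
  {
    fix i assume i: "i \<le> m" and A: "real i / real m \<le> c - \<delta>"
    define x where "x = real i / real m"
    note Ii = I[OF i, folded x_def]
    have "(1 - x) * (rinf \<sigma> c x - \<epsilon>r) - x * (1 - rinf \<sigma> c x + \<epsilon>r) = rinf \<sigma> c x - x - \<epsilon>r" by (simp add: algebra_simps)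
    moreover have "(\<sigma> - 1) * \<delta> / \<sigma> \<le> rinf \<sigma> c x - x"
    proof -
      have "(\<sigma> - 1) * \<delta> \<le> (\<sigma> - 1) * (c - x)" using A s by (intro mult_left_mono) (auto simp: x_def)
      then have "(\<sigma> - 1) * \<delta> / \<sigma> \<le> (\<sigma> - 1) * (c - x) / \<sigma>" using s by (intro divide_right_mono) auto
      then show ?thesis using drift[of x] by simp
    qed
    ultimately show "\<mu> \<le> up i - dn i" using Ii \<mu>d by linarith
  }
qed



lemma W_nonempty:
  assumes a: "a > 0" and sa: "\<sigma> * exp (- a) > 1" and d: "\<delta>' > 0"
  shows "(\<lambda>j. if j < k then rho_star \<sigma> a j else 0) \<in> Wset \<sigma> a k \<delta>'"
  using rho_star_pos[OF a sa] rho_star_le1[OF a sa] d by (auto simp: Wset_def less_imp_le)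

lemma Z_interval:
  fixes \<sigma> a \<kappa> q \<delta>' eM \<epsilon>r :: real and L m k i :: nat and th and upper :: bool
  assumes a: "a > 0" and sa: "\<sigma> * exp (- a) > 1" and k: "1 \<le> k" and m: "1 \<le> m" and i: "i \<le> m"
  and d': "\<delta>' > 0"
  and dM: "\<And>l. l \<le> k \<Longrightarrow> \<bar>Mh L \<kappa> q l k - Mlim a k l\<bar> \<le> eM"
  and d\<epsilon>: "\<bar>eps_theta L \<kappa> q k th\<bar> \<le> eM"
  and small: "2 * \<sigma> * (\<sigma> + 2 * real k + 3) * (2 * \<delta>' + eM) \<le> \<epsilon>r"
  shows "(1 - real i / real m) * (rinf \<sigma> (rho_star \<sigma> a k) (real i / real m) - \<epsilon>r) \<le> Zup \<sigma> a \<kappa> L q m k th \<delta>' upper i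
      \<and> Zup \<sigma> a \<kappa> L q m k th \<delta>' upper i \<le> (1 - real i / real m) * (rinf \<sigma> (rho_star \<sigma> a k) (real i / real m) + \<epsilon>r)
      \<and> (real i / real m) * (1 - rinf \<sigma> (rho_star \<sigma> a k) (real i / real m) - \<epsilon>r) \<le> Zdn \<sigma> a \<kappa> L q m k th \<delta>' upper i
      \<and> Zdn \<sigma> a \<kappa> L q m k th \<delta>' upper i \<le> (real i / real m) * (1 - rinf \<sigma> (rho_star \<sigma> a k) (real i / real m) + \<epsilon>r)"
proof -
  have ne: "Wset \<sigma> a k \<delta>' \<noteq> {}" using W_nonempty[OF a sa d'] by blast
  note R = rates_interval[OF a sa k m i _ dM d\<epsilon> small, folded rinf_def]
  have A: "(1 - real i / real m) * (rinf \<sigma> (rho_star \<sigma> a k) (real i / real m) - \<epsilon>r) \<le> Sup ((\<lambda>\<rho>. delta_fn \<sigma> \<kappa> L q m k th \<rho> i) ` Wset \<sigma> a k \<delta>')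
      \<and> Sup ((\<lambda>\<rho>. delta_fn \<sigma> \<kappa> L q m k th \<rho> i) ` Wset \<sigma> a k \<delta>') \<le> (1 - real i / real m) * (rinf \<sigma> (rho_star \<sigma> a k) (real i / real m) + \<epsilon>r)
      \<and> (1 - real i / real m) * (rinf \<sigma> (rho_star \<sigma> a k) (real i / real m) - \<epsilon>r) \<le> Inf ((\<lambda>\<rho>. delta_fn \<sigma> \<kappa> L q m k th \<rho> i) ` Wset \<sigma> a k \<delta>')
      \<and> Inf ((\<lambda>\<rho>. delta_fn \<sigma> \<kappa> L q m k th \<rho> i) ` Wset \<sigma> a k \<delta>') \<le> (1 - real i / real m) * (rinf \<sigma> (rho_star \<sigma> a k) (real i / real m) + \<epsilon>r)"
    by (rule sup_inf_in[OF ne]) (use R in \<open>auto simp: rinf_def\<close>)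
  have B: "(real i / real m) * (1 - rinf \<sigma> (rho_star \<sigma> a k) (real i / real m) - \<epsilon>r) \<le> Sup ((\<lambda>\<rho>. gamma_fn \<sigma> \<kappa> L q m k th \<rho> i) ` Wset \<sigma> a k \<delta>')
      \<and> Sup ((\<lambda>\<rho>. gamma_fn \<sigma> \<kappa> L q m k th \<rho> i) ` Wset \<sigma> a k \<delta>') \<le> (real i / real m) * (1 - rinf \<sigma> (rho_star \<sigma> a k) (real i / real m) + \<epsilon>r)
      \<and> (real i / real m) * (1 - rinf \<sigma> (rho_star \<sigma> a k) (real i / real m) - \<epsilon>r) \<le> Inf ((\<lambda>\<rho>. gamma_fn \<sigma> \<kappa> L q m k th \<rho> i) ` Wset \<sigma> a k \<delta>')
      \<and> Inf ((\<lambda>\<rho>. gamma_fn \<sigma> \<kappa> L q m k th \<rho> i) ` Wset \<sigma> a k \<delta>') \<le> (real i / real m) * (1 - rinf \<sigma> (rho_star \<sigma> a k) (real i / real m) + \<epsilon>r)"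
    by (rule sup_inf_in[OF ne]) (use R in \<open>auto simp: rinf_def\<close>)
  show ?thesis using A B
    by (cases upper) (simp_all add: Zup_def Zdn_def deltaU_def deltaL_def gammaU_def gammaL_def)
qed

lemma final1:
  fixes up dn :: "nat \<Rightarrow> real" and m :: nat and c \<delta> \<mu> :: real
  assumes m: "m \<ge> 1" and \<delta>: "\<delta> > 0" and \<mu>: "0 < \<mu>" "\<mu> \<le> 1" and c: "0 \<le> c" "c \<le> 1"
  and h1: "\<And>i. i \<le> m \<Longrightarrow> 0 \<le> up i \<and> 0 \<le> dn i \<and> up i + dn i \<le> 1"
  and hm: "up m = 0" and h0: "dn 0 = 0"
  and hd1: "\<And>i. i \<le> m \<Longrightarrow> c + \<delta> \<le> real i / real m \<Longrightarrow> \<mu> \<le> dn i - up i"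
  and hd2: "\<And>i. i \<le> m \<Longrightarrow> real i / real m \<le> c - \<delta> \<Longrightarrow> \<mu> \<le> up i - dn i"
  and m1: "32 / \<mu>\<^sup>2 \<le> real m" and m2: "16 / (\<mu> ^ 3 * \<delta>) \<le> real m"
  and i: "i \<le> m"
  shows "prob_tau_ge up dn {i. i \<le> m \<and> \<bar>real i / real m - c\<bar> < \<delta>} (real m powr 2) i \<le> exp (- 1 * real m)"
proof -
  define l where "l = \<mu> / 2"
  have mp: "real m > 0" using m by simp
  have mu2: "0 < \<mu>\<^sup>2" using \<mu> by simp
  have big: "exp (- \<mu> * \<delta> * real m) \<le> \<mu>\<^sup>2 / 16"
  proof -
    have "16 / \<mu>\<^sup>2 \<le> \<mu> * \<delta> * real m"
    proof -
      have "16 \<le> real m * (\<mu> ^ 3 * \<delta>)" using m2 \<mu> \<delta> by (simp add: divide_le_eq)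
      then show ?thesis using mu2 by (simp add: divide_le_eq power2_eq_square power3_eq_cube algebra_simps)
    qed
    also have "\<dots> \<le> exp (\<mu> * \<delta> * real m)" using exp_ge_add_one_self[of "\<mu> * \<delta> * real m"] by linarith
    finally have "16 / \<mu>\<^sup>2 \<le> exp (\<mu> * \<delta> * real m)" .
    then have "16 \<le> exp (\<mu> * \<delta> * real m) * \<mu>\<^sup>2" using mu2 by (simp add: divide_le_eq)
    then show ?thesis by (simp add: exp_minus field_simps)
  qed
  have pw: "nat \<lceil>real m powr 2\<rceil> = Suc (m\<^sup>2 - 1)"
  proof -
    have "real m powr 2 = real (m\<^sup>2)" using mp by simp
    then have "nat \<lceil>real m powr 2\<rceil> = m\<^sup>2" by (simp only: ceiling_of_nat nat_int)
    moreover have "m\<^sup>2 \<ge> 1" using m by simp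
    ultimately show ?thesis by simp
  qed
  define n where "n = m\<^sup>2 - 1"
  have core: "avoid_prob up dn {i. i \<le> m \<and> \<bar>real i / real m - c\<bar> < \<delta>} (Suc n) i
     \<le> (1 - \<mu>\<^sup>2/8) ^ n * (exp (l * (real i - real m * (c + \<delta>))) + exp (l * (real m * (c - \<delta>) - real i)))"
    by (rule claim1_core[OF m \<delta> \<mu> l_def h1 hm h0 hd1 hd2 big i])
  have G: "exp (l * (real i - real m * (c + \<delta>))) + exp (l * (real m * (c - \<delta>) - real i)) \<le> 2 * exp (l * real m)"
  proof -
    have l0: "0 \<le> l" using \<mu> by (simp add: l_def)
    have "0 \<le> real m * (c + \<delta>)" using c \<delta> by simp
    moreover have "real i \<le> real m" using i by simp
    ultimately have "real i - real m * (c + \<delta>) \<le> real m" by linarith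
    then have "l * (real i - real m * (c + \<delta>)) \<le> l * real m" using l0 by (intro mult_left_mono) auto
    then have E1: "exp (l * (real i - real m * (c + \<delta>))) \<le> exp (l * real m)" by simp
    have "real m * (c - \<delta>) \<le> real m * 1" using c \<delta> by (intro mult_left_mono) auto
    then have "real m * (c - \<delta>) - real i \<le> real m" by simp
    then have "l * (real m * (c - \<delta>) - real i) \<le> l * real m" using l0 by (intro mult_left_mono) auto
    then have E2: "exp (l * (real m * (c - \<delta>) - real i)) \<le> exp (l * real m)" by simp
    show ?thesis using E1 E2 by linarith
  qed
  have P: "(1 - \<mu>\<^sup>2/8) ^ n \<le> exp (- (\<mu>\<^sup>2/8 * real n))"
  proof -
    have "0 \<le> 1 - \<mu>\<^sup>2/8" using \<mu> power_le_one[of \<mu> 2] by simp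
    then have "(1 - \<mu>\<^sup>2/8) ^ n \<le> exp (- (\<mu>\<^sup>2/8)) ^ n" using exp_ge_add_one_self[of "- (\<mu>\<^sup>2/8)"]
      by (intro power_mono) auto
    also have "\<dots> = exp (- (\<mu>\<^sup>2/8 * real n))" using exp_of_nat_mult[of n "- (\<mu>\<^sup>2/8)"] by (simp add: mult.commute)
    finally show ?thesis .
  qed
  have "avoid_prob up dn {i. i \<le> m \<and> \<bar>real i / real m - c\<bar> < \<delta>} (Suc n) i \<le> exp (- (\<mu>\<^sup>2/8 * real n)) * (2 * exp (l * real m))"
  proof -
    have "(1 - \<mu>\<^sup>2/8) ^ n * (exp (l * (real i - real m * (c + \<delta>))) + exp (l * (real m * (c - \<delta>) - real i)))
       \<le> exp (- (\<mu>\<^sup>2/8 * real n)) * (2 * exp (l * real m))"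
      by (rule mult_mono[OF P G]) (auto intro: add_nonneg_nonneg)
    then show ?thesis using core by linarith
  qed
  also have "\<dots> \<le> exp 1 * exp (- (\<mu>\<^sup>2/8 * real n) + l * real m)"
  proof -
    have "2 \<le> exp (1::real)" using exp_ge_add_one_self[of 1] by simp
    then have Y: "2 * exp (- (\<mu>\<^sup>2/8 * real n) + l * real m) \<le> exp 1 * exp (- (\<mu>\<^sup>2/8 * real n) + l * real m)"
      by (intro mult_right_mono) auto
    have X: "exp (- (\<mu>\<^sup>2/8 * real n)) * (2 * exp (l * real m)) = 2 * exp (- (\<mu>\<^sup>2/8 * real n) + l * real m)"
      by (simp only: exp_add mult.assoc mult.left_commute)
    show ?thesis using X Y by linarith
  qed
  also have "\<dots> = exp (1 - \<mu>\<^sup>2/8 * real n + l * real m)" by (simp flip: exp_add)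
  also have "\<dots> \<le> exp (- 1 * real m)"
  proof -
    have rn: "real n = real m ^ 2 - 1" using m by (simp add: n_def of_nat_diff)
    have h: "\<mu>\<^sup>2/8 * real n = (\<mu>\<^sup>2/8 * real m) * real m - \<mu>\<^sup>2/8" unfolding rn by (simp add: power2_eq_square right_diff_distrib mult.assoc)
    have l1: "l * real m \<le> real m" using \<mu> mp by (simp add: l_def)
    have "4 \<le> \<mu>\<^sup>2 / 8 * real m" using m1 mu2 by (simp add: divide_le_eq mult.commute)
    then have h4: "4 * real m \<le> (\<mu>\<^sup>2 / 8 * real m) * real m" using mp by (intro mult_right_mono) auto
    have h5: "\<mu>\<^sup>2 / 8 \<le> 1" using \<mu> power_le_one[of \<mu> 2] by simp
    have h6: "1 \<le> real m" using m by simp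
    have "1 - \<mu>\<^sup>2/8 * real n + l * real m \<le> - 1 * real m"
      using h l1 h4 h5 h6 by linarith
    then show ?thesis by simp
  qed
  finally show ?thesis unfolding prob_tau_ge_def pw n_def .
qed

lemma final2:
  fixes up dn :: "nat \<Rightarrow> real" and m :: nat and c \<delta> \<mu> :: real
  assumes m: "m \<ge> 1" and \<delta>: "\<delta> > 0" and \<mu>: "0 < \<mu>" "\<mu> \<le> 1"
  and h1: "\<And>i. i \<le> m \<Longrightarrow> 0 \<le> up i \<and> 0 \<le> dn i \<and> up i + dn i \<le> 1"
  and hm: "up m = 0" and h0: "dn 0 = 0"
  and hd1: "\<And>i. i \<le> m \<Longrightarrow> c + \<delta> \<le> real i / real m \<Longrightarrow> \<mu> \<le> dn i - up i"
  and hd2: "\<And>i. i \<le> m \<Longrightarrow> real i / real m \<le> c - \<delta> \<Longrightarrow> \<mu> \<le> up i - dn i"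
  and m3: "48 / (\<mu> * \<delta>) \<le> real m"
  and i: "i \<le> m" "\<bar>real i / real m - c\<bar> < \<delta>"
  shows "prob_tau_le up dn ({0..m} - {i. i \<le> m \<and> \<bar>real i / real m - c\<bar> < 2 * \<delta>}) (exp (\<mu> * \<delta> / 8 * real m)) i
     \<le> exp (- (\<mu> * \<delta> / 4) * real m)"
proof -
  define l where "l = \<mu> / 2"
  have mp: "real m > 0" using m by simp
  have l0: "0 \<le> l" using \<mu> by (simp add: l_def)
  define n where "n = nat \<lfloor>exp (\<mu> * \<delta> / 8 * real m)\<rfloor> + 1"
  define E where "E = exp (- l * \<delta> * real m)"
  have core: "1 - avoid_prob up dn ({0..m} - {i. i \<le> m \<and> \<bar>real i / real m - c\<bar> < 2 * \<delta>}) n i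
     \<le> (exp (l * (real i - real m * (c + 2 * \<delta>))) + exp (l * (real m * (c - 2 * \<delta>) - real i))) + real n * (2 * E)"
    unfolding E_def by (rule claim2_core[OF m \<delta> \<mu> l_def h1 hm h0 hd1 hd2 i(1)])
  have G: "exp (l * (real i - real m * (c + 2 * \<delta>))) + exp (l * (real m * (c - 2 * \<delta>) - real i)) \<le> 2 * E"
  proof -
    have i1: "real i / real m < c + \<delta>" "c - \<delta> < real i / real m" using i(2) by auto
    have "real i < (c + \<delta>) * real m" using i1(1) mp by (simp add: divide_less_eq)
    then have "real i - real m * (c + 2 * \<delta>) \<le> - \<delta> * real m" by (simp add: algebra_simps)
    then have "l * (real i - real m * (c + 2 * \<delta>)) \<le> l * (- \<delta> * real m)" using l0 by (intro mult_left_mono) auto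
    then have t1: "exp (l * (real i - real m * (c + 2 * \<delta>))) \<le> E" by (simp add: E_def)
    have "(c - \<delta>) * real m < real i" using i1(2) mp by (simp add: less_divide_eq)
    then have "real m * (c - 2 * \<delta>) - real i \<le> - \<delta> * real m" by (simp add: algebra_simps)
    then have "l * (real m * (c - 2 * \<delta>) - real i) \<le> l * (- \<delta> * real m)" using l0 by (intro mult_left_mono) auto
    then have t2: "exp (l * (real m * (c - 2 * \<delta>) - real i)) \<le> E" by (simp add: E_def)
    show ?thesis using t1 t2 by simp
  qed
  have nb: "real n \<le> 2 * exp (\<mu> * \<delta> / 8 * real m)"
  proof -
    have e1: "1 \<le> exp (\<mu> * \<delta> / 8 * real m)" using \<mu> \<delta> mp by simp
    have "real (nat \<lfloor>exp (\<mu> * \<delta> / 8 * real m)\<rfloor>) \<le> exp (\<mu> * \<delta> / 8 * real m)"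
    proof -
      have "0 \<le> \<lfloor>exp (\<mu> * \<delta> / 8 * real m)\<rfloor>" by simp
      then have "real (nat \<lfloor>exp (\<mu> * \<delta> / 8 * real m)\<rfloor>) = real_of_int \<lfloor>exp (\<mu> * \<delta> / 8 * real m)\<rfloor>" by simp
      also have "\<dots> \<le> exp (\<mu> * \<delta> / 8 * real m)" by (rule of_int_floor_le)
      finally show ?thesis .
    qed
    moreover have "real n = real (nat \<lfloor>exp (\<mu> * \<delta> / 8 * real m)\<rfloor>) + 1" by (simp add: n_def)
    ultimately show ?thesis using e1 by linarith
  qed
  have "1 - avoid_prob up dn ({0..m} - {i. i \<le> m \<and> \<bar>real i / real m - c\<bar> < 2 * \<delta>}) n i \<le> 2 * E + real n * (2 * E)"
    using core G by linarith
  also have "\<dots> \<le> 2 * E + 2 * exp (\<mu> * \<delta> / 8 * real m) * (2 * E)"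
    using nb by (intro add_left_mono mult_right_mono) (auto simp: E_def)
  also have "\<dots> \<le> 6 * exp (- (\<mu> * \<delta> / 4) * real m) * exp (- (\<mu> * \<delta> / 8) * real m)"
  proof -
    have E1: "E \<le> exp (- (\<mu> * \<delta> / 4) * real m) * exp (- (\<mu> * \<delta> / 8) * real m)"
      unfolding E_def l_def exp_add[symmetric] using \<mu> \<delta> mp by (simp add: algebra_simps)
    have E2: "exp (\<mu> * \<delta> / 8 * real m) * E = exp (- (\<mu> * \<delta> / 4) * real m) * exp (- (\<mu> * \<delta> / 8) * real m)"
      unfolding E_def l_def exp_add[symmetric] by (simp add: algebra_simps)
    show ?thesis using E1 E2 by (simp add: algebra_simps)
  qed
  also have "\<dots> \<le> exp (- (\<mu> * \<delta> / 4) * real m) * 1"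
  proof -
    have "6 \<le> \<mu> * \<delta> / 8 * real m" using m3 \<mu> \<delta> by (simp add: divide_le_eq algebra_simps)
    then have "6 \<le> exp (\<mu> * \<delta> / 8 * real m)" using exp_ge_add_one_self[of "\<mu> * \<delta> / 8 * real m"] by linarith
    then have "6 * exp (- (\<mu> * \<delta> / 8) * real m) \<le> 1"
      by (simp add: exp_minus field_simps)
    then have "exp (- (\<mu> * \<delta> / 4) * real m) * (6 * exp (- (\<mu> * \<delta> / 8) * real m)) \<le> exp (- (\<mu> * \<delta> / 4) * real m) * 1"
      by (intro mult_left_mono) auto
    then show ?thesis by (simp add: algebra_simps)
  qed
  finally show ?thesis unfolding prob_tau_le_def n_def by simp
qed



theorem mainTheorem9:
  fixes \<sigma> a :: real and \<kappa> K k :: nat and th :: theta_mode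
  assumes "a > 0" and "\<sigma> * exp (- a) > 1" and "\<kappa> \<ge> 2"
    and "1 \<le> k" and "k \<le> K"
  shows "\<forall>\<delta>>0. \<exists>\<delta>0>0. \<forall>\<delta>'. 0 < \<delta>' \<and> \<delta>' < \<delta>0 \<longrightarrow>
    (\<exists>\<alpha> \<alpha>' \<beta> \<beta>'. \<alpha> > 0 \<and> \<alpha>' > 0 \<and> \<beta> > 0 \<and> \<beta>' > 0 \<and>
      (\<exists>N. \<exists>\<eta>>0. \<forall>L m q. N \<le> L \<and> N \<le> m \<and> 0 < q \<and> q < \<eta> \<and> \<bar>real L * q - a\<bar> < \<eta> \<longrightarrow>
        (\<forall>upper::bool.
          (\<forall>i\<le>m. prob_tau_ge (Zup \<sigma> a (real \<kappa>) L q m k th \<delta>' upper) (Zdn \<sigma> a (real \<kappa>) L q m k th \<delta>' upper)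
                     (Vk \<sigma> a m k \<delta>) (real m powr \<alpha>) i \<le> exp (- \<alpha>' * real m)) \<and>
          (\<forall>i\<in>Vk \<sigma> a m k \<delta>. prob_tau_le (Zup \<sigma> a (real \<kappa>) L q m k th \<delta>' upper) (Zdn \<sigma> a (real \<kappa>) L q m k th \<delta>' upper)
                     ({0..m} - Vk \<sigma> a m k (2 * \<delta>)) (exp (\<beta> * real m)) i \<le> exp (- \<beta>' * real m)))))"
proof (intro allI impI)
  fix \<delta> :: real assume \<delta>: "\<delta> > 0"
  note a = assms(1) and sa = assms(2) and k = assms(4)
  have s: "\<sigma> > 1" by (rule sigma_gt1[OF a sa])
  define c where "c = rho_star \<sigma> a k"
  have c0: "0 < c" using rho_star_pos[OF a sa] by (simp add: c_def)
  have c1: "c < 1" using rho_star_lt1[OF a sa k] by (simp add: c_def)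
  define \<kappa>1 where "\<kappa>1 = (\<sigma> - 1) / \<sigma>"
  have \<kappa>1: "0 < \<kappa>1" using s by (simp add: \<kappa>1_def)
  define \<epsilon>r where "\<epsilon>r = \<kappa>1 * min \<delta> (min c (1 - c)) / 2"
  have \<epsilon>r: "0 < \<epsilon>r" using \<kappa>1 \<delta> c0 c1 by (simp add: \<epsilon>r_def)
  have \<epsilon>r1: "\<epsilon>r \<le> (\<sigma> - 1) * c / \<sigma>" and \<epsilon>r2: "\<epsilon>r \<le> (\<sigma> - 1) * (1 - c) / \<sigma>" and \<epsilon>r3: "\<epsilon>r \<le> \<kappa>1 * \<delta> / 2"
  proof -
    have "min \<delta> (min c (1 - c)) \<le> c" "min \<delta> (min c (1 - c)) \<le> 1 - c" "min \<delta> (min c (1 - c)) \<le> \<delta>" by auto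
    then have "\<kappa>1 * min \<delta> (min c (1 - c)) \<le> \<kappa>1 * c" "\<kappa>1 * min \<delta> (min c (1 - c)) \<le> \<kappa>1 * (1 - c)"
      "\<kappa>1 * min \<delta> (min c (1 - c)) \<le> \<kappa>1 * \<delta>"
      using \<kappa>1 by (auto intro: mult_left_mono)
    moreover have "0 \<le> \<kappa>1 * min \<delta> (min c (1 - c))" using \<kappa>1 c0 c1 \<delta> by simp
    moreover have "\<kappa>1 * c = (\<sigma> - 1) * c / \<sigma>" "\<kappa>1 * (1 - c) = (\<sigma> - 1) * (1 - c) / \<sigma>" by (simp_all add: \<kappa>1_def)
    moreover have "\<epsilon>r = (\<kappa>1 * min \<delta> (min c (1 - c))) / 2" by (simp add: \<epsilon>r_def)
    ultimately show "\<epsilon>r \<le> (\<sigma> - 1) * c / \<sigma>" "\<epsilon>r \<le> (\<sigma> - 1) * (1 - c) / \<sigma>" "\<epsilon>r \<le> \<kappa>1 * \<delta> / 2"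
      by linarith+
  qed
  define K0 where "K0 = 2 * \<sigma> * (\<sigma> + 2 * real k + 3)"
  have K0: "0 < K0" using s by (simp add: K0_def)
  define eM where "eM = \<epsilon>r / (2 * K0)"
  have eM: "0 < eM" using \<epsilon>r K0 by (simp add: eM_def)
  show "\<exists>\<delta>0>0. \<forall>\<delta>'. 0 < \<delta>' \<and> \<delta>' < \<delta>0 \<longrightarrow>
    (\<exists>\<alpha> \<alpha>' \<beta> \<beta>'. \<alpha> > 0 \<and> \<alpha>' > 0 \<and> \<beta> > 0 \<and> \<beta>' > 0 \<and>
      (\<exists>N. \<exists>\<eta>>0. \<forall>L m q. N \<le> L \<and> N \<le> m \<and> 0 < q \<and> q < \<eta> \<and> \<bar>real L * q - a\<bar> < \<eta> \<longrightarrow>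
        (\<forall>upper::bool.
          (\<forall>i\<le>m. prob_tau_ge (Zup \<sigma> a (real \<kappa>) L q m k th \<delta>' upper) (Zdn \<sigma> a (real \<kappa>) L q m k th \<delta>' upper)
                     (Vk \<sigma> a m k \<delta>) (real m powr \<alpha>) i \<le> exp (- \<alpha>' * real m)) \<and>
          (\<forall>i\<in>Vk \<sigma> a m k \<delta>. prob_tau_le (Zup \<sigma> a (real \<kappa>) L q m k th \<delta>' upper) (Zdn \<sigma> a (real \<kappa>) L q m k th \<delta>' upper)
                     ({0..m} - Vk \<sigma> a m k (2 * \<delta>)) (exp (\<beta> * real m)) i \<le> exp (- \<beta>' * real m)))))"
  proof (rule exI[of _ "eM / 2"], intro conjI allI impI)
    show "0 < eM / 2" using eM by simp
    fix \<delta>' :: real assume d': "0 < \<delta>' \<and> \<delta>' < eM / 2"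
    have small: "2 * \<sigma> * (\<sigma> + 2 * real k + 3) * (2 * \<delta>' + eM) \<le> \<epsilon>r"
    proof -
      have "K0 * (2 * \<delta>' + eM) \<le> K0 * (2 * eM)" using d' K0 by (intro mult_left_mono) auto
      also have "\<dots> = \<epsilon>r" using K0 by (simp add: eM_def)
      finally show ?thesis by (simp add: K0_def)
    qed
    define \<mu> where "\<mu> = min 1 (\<kappa>1 * \<delta> / 2)"
    have \<mu>: "0 < \<mu>" "\<mu> \<le> 1" using \<kappa>1 \<delta> by (auto simp: \<mu>_def)
    have \<mu>d: "\<mu> \<le> (\<sigma> - 1) * \<delta> / \<sigma> - \<epsilon>r"
    proof -
      have "\<mu> \<le> \<kappa>1 * \<delta> / 2" by (simp add: \<mu>_def)
      then have "\<mu> \<le> \<kappa>1 * \<delta> - \<epsilon>r" using \<epsilon>r3 by linarith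
      then show ?thesis by (simp add: \<kappa>1_def)
    qed
    have kap: "real \<kappa> > 1" using assms(3) by simp
    have ev1: "\<forall>l\<in>{..k}. eventually (\<lambda>x. \<bar>Mh (fst x) (real \<kappa>) (snd x) l k - Mlim a k l\<bar> < eM) (FF a)"
    proof
      fix l assume "l \<in> {..k}"
      from tendstoD[OF Mh_tendsto[OF kap, of l k a] eM]
      show "eventually (\<lambda>x. \<bar>Mh (fst x) (real \<kappa>) (snd x) l k - Mlim a k l\<bar> < eM) (FF a)"
        by (simp add: dist_real_def Mlim_def)
    qed
    have ev2: "eventually (\<lambda>x. \<bar>eps_theta (fst x) (real \<kappa>) (snd x) k th\<bar> < eM) (FF a)"
    proof (cases th)
      case Theta_ell then show ?thesis using eM by (simp add: eps_theta_def)
    next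
      case Theta_Kplus1
      from tendstoD[OF Mh_tendsto[OF kap, of "k + 1" k a] eM]
      show ?thesis using Theta_Kplus1 by (simp add: dist_real_def eps_theta_def)
    qed
    have ev: "eventually (\<lambda>x. (\<forall>l\<in>{..k}. \<bar>Mh (fst x) (real \<kappa>) (snd x) l k - Mlim a k l\<bar> < eM)
        \<and> \<bar>eps_theta (fst x) (real \<kappa>) (snd x) k th\<bar> < eM) (FF a)"
      using eventually_ball_finite[OF _ ev1] ev2 by (intro eventually_conj) auto
    obtain N1 \<eta> where \<eta>: "\<eta> > 0" and N1: "\<forall>L q. N1 \<le> L \<and> 0 < q \<and> q < \<eta> \<and> \<bar>real L * q - a\<bar> < \<eta> \<longrightarrow>
        (\<forall>l\<in>{..k}. \<bar>Mh L (real \<kappa>) q l k - Mlim a k l\<bar> < eM) \<and> \<bar>eps_theta L (real \<kappa>) q k th\<bar> < eM"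
      using FF_unpack[OF ev] by auto
    define Nm where "Nm = nat \<lceil>max (32 / \<mu>\<^sup>2) (max (16 / (\<mu> ^ 3 * \<delta>)) (48 / (\<mu> * \<delta>)))\<rceil> + 1"
    show "\<exists>\<alpha> \<alpha>' \<beta> \<beta>'. \<alpha> > 0 \<and> \<alpha>' > 0 \<and> \<beta> > 0 \<and> \<beta>' > 0 \<and>
      (\<exists>N. \<exists>\<eta>>0. \<forall>L m q. N \<le> L \<and> N \<le> m \<and> 0 < q \<and> q < \<eta> \<and> \<bar>real L * q - a\<bar> < \<eta> \<longrightarrow>
        (\<forall>upper::bool.
          (\<forall>i\<le>m. prob_tau_ge (Zup \<sigma> a (real \<kappa>) L q m k th \<delta>' upper) (Zdn \<sigma> a (real \<kappa>) L q m k th \<delta>' upper)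
                     (Vk \<sigma> a m k \<delta>) (real m powr \<alpha>) i \<le> exp (- \<alpha>' * real m)) \<and>
          (\<forall>i\<in>Vk \<sigma> a m k \<delta>. prob_tau_le (Zup \<sigma> a (real \<kappa>) L q m k th \<delta>' upper) (Zdn \<sigma> a (real \<kappa>) L q m k th \<delta>' upper)
                     ({0..m} - Vk \<sigma> a m k (2 * \<delta>)) (exp (\<beta> * real m)) i \<le> exp (- \<beta>' * real m))))"
    proof -
    have main: "\<forall>L m q. max N1 Nm \<le> L \<and> max N1 Nm \<le> m \<and> 0 < q \<and> q < \<eta> \<and> \<bar>real L * q - a\<bar> < \<eta> \<longrightarrow>
        (\<forall>upper::bool.
          (\<forall>i\<le>m. prob_tau_ge (Zup \<sigma> a (real \<kappa>) L q m k th \<delta>' upper) (Zdn \<sigma> a (real \<kappa>) L q m k th \<delta>' upper)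
                     (Vk \<sigma> a m k \<delta>) (real m powr 2) i \<le> exp (- 1 * real m)) \<and>
          (\<forall>i\<in>Vk \<sigma> a m k \<delta>. prob_tau_le (Zup \<sigma> a (real \<kappa>) L q m k th \<delta>' upper) (Zdn \<sigma> a (real \<kappa>) L q m k th \<delta>' upper)
                     ({0..m} - Vk \<sigma> a m k (2 * \<delta>)) (exp (\<mu> * \<delta> / 8 * real m)) i \<le> exp (- (\<mu> * \<delta> / 4) * real m)))"
    proof (intro allI impI)
      fix L m q upper assume H: "max N1 Nm \<le> L \<and> max N1 Nm \<le> m \<and> 0 < q \<and> q < \<eta> \<and> \<bar>real L * q - a\<bar> < \<eta>"
      have PL: "(\<forall>l\<in>{..k}. \<bar>Mh L (real \<kappa>) q l k - Mlim a k l\<bar> < eM) \<and> \<bar>eps_theta L (real \<kappa>) q k th\<bar> < eM"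
        using N1 H by auto
      have dM: "\<And>l. l \<le> k \<Longrightarrow> \<bar>Mh L (real \<kappa>) q l k - Mlim a k l\<bar> \<le> eM" using PL by (auto intro: less_imp_le)
      have d\<epsilon>: "\<bar>eps_theta L (real \<kappa>) q k th\<bar> \<le> eM" using PL by auto
      have mNm: "Nm \<le> m" using H by auto
      have m: "1 \<le> m" using mNm by (simp add: Nm_def)
      have mbig: "max (32 / \<mu>\<^sup>2) (max (16 / (\<mu> ^ 3 * \<delta>)) (48 / (\<mu> * \<delta>))) \<le> real m"
      proof -
        have "max (32 / \<mu>\<^sup>2) (max (16 / (\<mu> ^ 3 * \<delta>)) (48 / (\<mu> * \<delta>))) \<le> real (nat \<lceil>max (32 / \<mu>\<^sup>2) (max (16 / (\<mu> ^ 3 * \<delta>)) (48 / (\<mu> * \<delta>)))\<rceil>)"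
          by (rule real_nat_ceiling_ge)
        also have "\<dots> \<le> real m"
        proof -
          have "nat \<lceil>max (32 / \<mu>\<^sup>2) (max (16 / (\<mu> ^ 3 * \<delta>)) (48 / (\<mu> * \<delta>)))\<rceil> \<le> m" using mNm unfolding Nm_def by linarith
          then show ?thesis by (simp only: of_nat_le_iff)
        qed
        finally show ?thesis .
      qed
      then have m1: "32 / \<mu>\<^sup>2 \<le> real m" and m2: "16 / (\<mu> ^ 3 * \<delta>) \<le> real m" and m3: "48 / (\<mu> * \<delta>) \<le> real m"
        by auto
      define up where "up = Zup \<sigma> a (real \<kappa>) L q m k th \<delta>' upper"
      define dn where "dn = Zdn \<sigma> a (real \<kappa>) L q m k th \<delta>' upper"
      have I: "\<And>i. i \<le> m \<Longrightarrow> (1 - real i / real m) * (rinf \<sigma> c (real i / real m) - \<epsilon>r) \<le> up i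
      \<and> up i \<le> (1 - real i / real m) * (rinf \<sigma> c (real i / real m) + \<epsilon>r)
      \<and> (real i / real m) * (1 - rinf \<sigma> c (real i / real m) - \<epsilon>r) \<le> dn i
      \<and> dn i \<le> (real i / real m) * (1 - rinf \<sigma> c (real i / real m) + \<epsilon>r)"
        unfolding up_def dn_def c_def using d' by (intro Z_interval[OF a sa k m _ _ dM d\<epsilon> small]) auto
      note PR = props_from_interval[OF m s I \<epsilon>r1 \<epsilon>r2 \<mu>d]
      have c01: "0 \<le> c" "c \<le> 1" using c0 c1 by auto
      have V1: "Vk \<sigma> a m k \<delta> = {i. i \<le> m \<and> \<bar>real i / real m - c\<bar> < \<delta>}" by (simp add: Vk_def c_def)
      have V2: "Vk \<sigma> a m k (2 * \<delta>) = {i. i \<le> m \<and> \<bar>real i / real m - c\<bar> < 2 * \<delta>}" by (simp add: Vk_def c_def)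
      show "(\<forall>i\<le>m. prob_tau_ge (Zup \<sigma> a (real \<kappa>) L q m k th \<delta>' upper) (Zdn \<sigma> a (real \<kappa>) L q m k th \<delta>' upper)
                     (Vk \<sigma> a m k \<delta>) (real m powr 2) i \<le> exp (- 1 * real m)) \<and>
          (\<forall>i\<in>Vk \<sigma> a m k \<delta>. prob_tau_le (Zup \<sigma> a (real \<kappa>) L q m k th \<delta>' upper) (Zdn \<sigma> a (real \<kappa>) L q m k th \<delta>' upper)
                     ({0..m} - Vk \<sigma> a m k (2 * \<delta>)) (exp (\<mu> * \<delta> / 8 * real m)) i \<le> exp (- (\<mu> * \<delta> / 4) * real m))"
        unfolding up_def[symmetric] dn_def[symmetric] V1 V2
      proof (intro conjI allI impI ballI)
        fix i assume i: "i \<le> m"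
        show "prob_tau_ge up dn {i. i \<le> m \<and> \<bar>real i / real m - c\<bar> < \<delta>} (real m powr 2) i \<le> exp (- 1 * real m)"
          by (rule final1[OF m \<delta> \<mu> c01 PR m1 m2 i])
      next
        fix i assume i: "i \<in> {i. i \<le> m \<and> \<bar>real i / real m - c\<bar> < \<delta>}"
        show "prob_tau_le up dn ({0..m} - {i. i \<le> m \<and> \<bar>real i / real m - c\<bar> < 2 * \<delta>}) (exp (\<mu> * \<delta> / 8 * real m)) i
           \<le> exp (- (\<mu> * \<delta> / 4) * real m)"
          using i by (intro final2[OF m \<delta> \<mu> PR m3]) auto
      qed
    qed
    have pos: "0 < \<mu> * \<delta> / 8" "0 < \<mu> * \<delta> / 4" using \<mu> \<delta> by auto
    have ex: "\<exists>N. \<exists>\<eta>>0. \<forall>L m q. N \<le> L \<and> N \<le> m \<and> 0 < q \<and> q < \<eta> \<and> \<bar>real L * q - a\<bar> < \<eta> \<longrightarrow>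
        (\<forall>upper::bool.
          (\<forall>i\<le>m. prob_tau_ge (Zup \<sigma> a (real \<kappa>) L q m k th \<delta>' upper) (Zdn \<sigma> a (real \<kappa>) L q m k th \<delta>' upper)
                     (Vk \<sigma> a m k \<delta>) (real m powr 2) i \<le> exp (- 1 * real m)) \<and>
          (\<forall>i\<in>Vk \<sigma> a m k \<delta>. prob_tau_le (Zup \<sigma> a (real \<kappa>) L q m k th \<delta>' upper) (Zdn \<sigma> a (real \<kappa>) L q m k th \<delta>' upper)
                     ({0..m} - Vk \<sigma> a m k (2 * \<delta>)) (exp (\<mu> * \<delta> / 8 * real m)) i \<le> exp (- (\<mu> * \<delta> / 4) * real m)))"
      using main \<eta> by blast
    show ?thesis
      by (rule exI[of _ 2], rule exI[of _ 1], rule exI[of _ "\<mu> * \<delta> / 8"], rule exI[of _ "\<mu> * \<delta> / 4"])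
        (use pos ex in simp)
    qed
  qed
qed


end
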